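(* Assume the following setting: $d=1$; $p:\mathbb{Z}\to[0,1)$ with $\sum_xp(x)=1$, $p(x)=0$ for $|x|>M$, and for every $u\in\mathbb{Z}$ the smallest additive subgroup containing $\{u+x:p(x)>0\}$ is $\mathbb{Z}$; $m_p=\sum_xxp(x)$, $b=-m_p$, $\sigma_1^2=\sum_x(x-m_p)^2p(x)>0$; $\{\xi_t(x)\}$ i.i.d. real, mean $0$, $\mathbb{E}[\xi_t(x)^{12}]<\infty$; harness process $h_{t+1}(x)=\sum_yp(x,y)h_t(y)+\xi_{t+1}(x)$ with $h_0(0)=0$, stationary initial increments $\eta_0(x)=h_0(x)-h_0(x-1)$ independent of $\{\xi_t\}_{t\ge1}$ with mean $\mu_0$, satisfying one of: (a) i.i.d. with $\mathbf{E}[\eta_0(x)^{12}]<\infty$; (b) strongly mixing with some $\delta>0$ such that $\mathbf{E}|\eta_0(0)|^{12+\delta}<\infty$ and $\sum_{j\ge0}(j+1)^{10+132/\delta}\alpha(j)<\infty$; (c) $\eta_0(x)=\sum_{y}\sum_{k\ge0}\xi_{-k}(y)[p^k(x,y)-p^k(x-1,y)]$. Let $\mathcal{Z}_n(t,r)=n^{-1/4}\{h_{\lfloor nt\rfloor}(\lfloor r\sqrt n\rfloor+\lfloor ntb\rfloor)-\mu_0r\sqrt n\}$. Then for any fixed $1<\gamma<3/2$ and every $\varepsilon>0$, \[\lim_{n\to\infty}\mathbf{P}\Bigl\{\sup_{\substack{(t,r),(s,q)\in[0,1]^2\\|(t,r)-(s,q)|<n^{-\gamma}}}|\mathcal{Z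}_n(t,r)-\mathcal{Z}_n(s,q)|>\varepsilon\Bigr\}=0.\]
   Context: $p(x,y)=p(y-x)$, $p^k$ the $k$-step transition. $|\cdot|$ is Euclidean distance in $\mathbb{R}^2$. Strong mixing coefficients: $\alpha(n)=\sup_k\sup_{A\in\mathcal{F}_{-\infty,k},B\in\mathcal{F}_{k+n,\infty}}|P(A\cap B)-P(A)P(B)|$ with $\mathcal{F}_{m,n}=\sigma\{\eta_0(x):m\le x\le n\}$; strongly mixing means $\alpha(n)\to0$. *)

theory Defs
  imports "HOL-Probability.Probability"
begin

definition int_subgroup_gen :: "int set \<Rightarrow> int set" where
  "int_subgroup_gen S = \<Inter>{G. 0 \<in> G \<and> (\<forall>a\<in>G. \<forall>b\<in>G. a - b \<in> G) \<and> S \<subseteq> G}"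

text \<open>k-step transition kernel as a function of the displacement: p^k(x,y) = kstep p k (y - x).\<close>
fun kstep :: "(int \<Rightarrow> real) \<Rightarrow> nat \<Rightarrow> int \<Rightarrow> real" where
  "kstep p 0 z = (if z = 0 then 1 else 0)"
| "kstep p (Suc k) z = (\<Sum>\<^sub>\<infinity>w. p w * kstep p k (z - w))"

definition gen_field :: "'a measure \<Rightarrow> ('i \<Rightarrow> 'a \<Rightarrow> real) \<Rightarrow> 'i set \<Rightarrow> 'a set set" where
  "gen_field M X I =
     sets (vimage_algebra (space M) (\<lambda>\<omega>. \<lambda>i\<in>I. X i \<omega>) (PiM I (\<lambda>_. (borel :: real measure))))"

definition strong_mixing_coeff :: "'a measure \<Rightarrow> (int \<Rightarrow> 'a \<Rightarrow> real) \<Rightarrow> nat \<Rightarrow> real" where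
  "strong_mixing_coeff M X n =
     Sup {\<bar>measure M (A \<inter> B) - measure M A * measure M B\<bar> | A B.
            \<exists>k::int. A \<in> gen_field M X {..k} \<and> B \<in> gen_field M X {k + int n..}}"

definition Zproc :: "(nat \<Rightarrow> int \<Rightarrow> 'a \<Rightarrow> real) \<Rightarrow> real \<Rightarrow> real \<Rightarrow> nat \<Rightarrow> real \<Rightarrow> real \<Rightarrow> 'a \<Rightarrow> real" where
  "Zproc h mu0 b n t r \<omega> =
     real n powr (-1/4) *
       (h (nat \<lfloor>real n * t\<rfloor>) (\<lfloor>r * sqrt (real n)\<rfloor> + \<lfloor>real n * t * b\<rfloor>) \<omega>
        - mu0 * r * sqrt (real n))"

end

theory Submission
  imports Defs
begin

lemma sum_supp:
  fixes f :: "int \<Rightarrow> real"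
  assumes "finite A" "{-B..B} \<subseteq> A" "\<And>z. z \<in> A \<Longrightarrow> \<bar>z\<bar> > B \<Longrightarrow> f z = 0"
  shows "sum f A = sum f {-B..B}"
  by (rule sum.mono_neutral_right) (use assms in auto)

lemma sum_win:
  fixes f :: "int \<Rightarrow> real"
  assumes "\<And>z. \<bar>z\<bar> > B \<Longrightarrow> f z = 0" "B \<le> N"
  shows "(\<Sum>z\<in>{-N..N}. f z) = (\<Sum>z\<in>{-B..B}. f z)"
  by (rule sum_supp) (use assms in auto)

lemma sum_shift:
  fixes f :: "int \<Rightarrow> real"
  assumes "\<And>z. \<bar>z\<bar> > B \<Longrightarrow> f z = 0" "B + \<bar>c\<bar> \<le> N"
  shows "(\<Sum>z\<in>{-N..N}. f (z + c)) = (\<Sum>z\<in>{-N..N}. f z)"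
proof -
  have "(\<Sum>z\<in>{-N..N}. f (z + c)) = (\<Sum>w\<in>(\<lambda>z. z + c) ` {-N..N}. f w)"
    by (subst sum.reindex) (auto simp: inj_on_def)
  also have "(\<lambda>z. z + c) ` {-N..N} = {-N+c..N+c}"
    by (auto simp: image_iff intro!: exI[of _ "_ - c"])
  also have "(\<Sum>w\<in>{-N+c..N+c}. f w) = (\<Sum>z\<in>{-B..B}. f z)"
    by (rule sum_supp) (use assms in auto)
  also have "\<dots> = (\<Sum>z\<in>{-N..N}. f z)"
    by (rule sum_win[symmetric]) (use assms in auto)
  finally show ?thesis .
qed

locale walk =
  fixes p :: "int \<Rightarrow> real" and R :: nat
  assumes p_nn: "\<And>x. 0 \<le> p x"
    and p_supp: "\<And>x. \<bar>x\<bar> > int R \<Longrightarrow> p x = 0"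
    and p_one: "(\<Sum>a\<in>{-int R..int R}. p a) = 1"
begin

fun PP :: "nat \<Rightarrow> int \<Rightarrow> real" where
  "PP 0 z = (if z = 0 then 1 else 0)"
| "PP (Suc k) z = (\<Sum>a\<in>{-int R..int R}. p a * PP k (z - a))"

lemma PP_nn: "0 \<le> PP k z"
  by (induction k arbitrary: z) (auto intro!: sum_nonneg mult_nonneg_nonneg p_nn)

lemma PP_supp: "\<bar>z\<bar> > int k * int R \<Longrightarrow> PP k z = 0"
proof (induction k arbitrary: z)
  case 0 then show ?case by auto
next
  case (Suc k)
  have "PP k (z - a) = 0" if "a \<in> {-int R..int R}" for a
    using Suc.prems that by (intro Suc.IH) (auto simp: algebra_simps abs_if split: if_splits)
  then show ?case by simp
qed

lemma PP_sum: "int k * int R \<le> N \<Longrightarrow> (\<Sum>z\<in>{-N..N}. PP k z) = 1"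
proof (induction k arbitrary: N)
  case 0 then show ?case by (simp add: sum.delta)
next
  case (Suc k)
  have "(\<Sum>z\<in>{-N..N}. PP (Suc k) z) = (\<Sum>a\<in>{-int R..int R}. p a * (\<Sum>z\<in>{-N..N}. PP k (z - a)))"
    by (simp add: sum_distrib_left sum.swap[of _ "{-N..N}"])
  also have "\<dots> = (\<Sum>a\<in>{-int R..int R}. p a * 1)"
  proof (intro sum.cong refl)
    fix a assume a: "a \<in> {-int R..int R}"
    have "(\<Sum>z\<in>{-N..N}. PP k (z + (- a))) = (\<Sum>z\<in>{-N..N}. PP k z)"
      by (rule sum_shift[where B="int k * int R"]) (use PP_supp a Suc.prems in \<open>auto simp: algebra_simps\<close>)
    also have "\<dots> = 1" by (rule Suc.IH) (use Suc.prems in \<open>auto simp: algebra_simps\<close>)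
    finally show "p a * (\<Sum>z\<in>{-N..N}. PP k (z - a)) = p a * 1" by simp
  qed
  also have "\<dots> = 1" using p_one by simp
  finally show ?case .
qed

lemma PP_le1: "PP k z \<le> 1"
proof -
  define N where "N = max \<bar>z\<bar> (int k * int R)"
  have "PP k z = (\<Sum>w\<in>{z}. PP k w)" by simp
  also have "\<dots> \<le> (\<Sum>w\<in>{-N..N}. PP k w)"
    by (rule sum_mono2) (auto simp: N_def PP_nn)
  also have "\<dots> = 1" by (rule PP_sum) (auto simp: N_def)
  finally show ?thesis .
qed

end

context walk begin

definition Q :: "int \<Rightarrow> int \<Rightarrow> (int \<Rightarrow> real) \<Rightarrow> real" where
  "Q N c f = (\<Sum>w\<in>{-N..N}. (f w - f (w + c))^2)"

definition DD :: "int \<Rightarrow> (int \<Rightarrow> real) \<Rightarrow> real" where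
  "DD N f = (\<Sum>a\<in>{-int R..int R}. \<Sum>b\<in>{-int R..int R}. p a * p b * Q N (a - b) f)"

definition fsupp :: "int \<Rightarrow> (int \<Rightarrow> real) \<Rightarrow> bool" where
  "fsupp B f \<longleftrightarrow> (\<forall>z. \<bar>z\<bar> > B \<longrightarrow> f z = 0)"

lemma Q_nn: "0 \<le> Q N c f" unfolding Q_def by (auto intro: sum_nonneg)

lemma DD_nn: "0 \<le> DD N f" unfolding DD_def
  by (auto intro!: sum_nonneg mult_nonneg_nonneg p_nn Q_nn)

lemma Q_win: assumes "fsupp B f" "B + \<bar>c\<bar> \<le> N" shows "Q N c f = Q (B + \<bar>c\<bar>) c f"
  unfolding Q_def by (rule sum_win) (use assms in \<open>auto simp: fsupp_def\<close>)

lemma DD_win: assumes "fsupp B f" "B + 2 * int R \<le> N" shows "DD N f = DD (B + 2 * int R) f"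
  unfolding DD_def
proof (intro sum.cong refl)
  fix a b assume a: "a \<in> {-int R..int R}" and b: "b \<in> {-int R..int R}"
  have "Q N (a - b) f = Q (B + \<bar>a - b\<bar>) (a - b) f" by (rule Q_win) (use assms a b in auto)
  also have "\<dots> = Q (B + 2 * int R) (a - b) f" by (rule Q_win[symmetric]) (use assms a b in auto)
  finally show "p a * p b * Q N (a - b) f = p a * p b * Q (B + 2 * int R) (a - b) f" by simp
qed

lemma dirichlet:
  assumes f: "fsupp B f" and B: "0 \<le> B" and N: "B + 3 * int R \<le> N"
  shows "(\<Sum>w\<in>{-N..N}. (\<Sum>a\<in>{-int R..int R}. p a * f (w - a))^2)
       = (\<Sum>w\<in>{-N..N}. (f w)^2) - DD N f / 2"
proof -
  define S where "S = (\<Sum>w\<in>{-N..N}. (f w)^2)"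
  have "(\<Sum>w\<in>{-N..N}. (\<Sum>a\<in>{-int R..int R}. p a * f (w - a))^2)
      = (\<Sum>w\<in>{-N..N}. \<Sum>a\<in>{-int R..int R}. \<Sum>b\<in>{-int R..int R}. p a * p b * (f (w - a) * f (w - b)))"
    by (simp add: power2_eq_square sum_product algebra_simps)
  also have "\<dots> = (\<Sum>a\<in>{-int R..int R}. \<Sum>b\<in>{-int R..int R}. p a * p b * (\<Sum>w\<in>{-N..N}. f (w - a) * f (w - b)))"
    by (simp add: sum_distrib_left sum.swap[of _ "{-N..N}"])
  also have "\<dots> = (\<Sum>a\<in>{-int R..int R}. \<Sum>b\<in>{-int R..int R}. p a * p b * (S - Q N (a - b) f / 2))"
  proof (intro sum.cong refl)
    fix a b assume a: "a \<in> {-int R..int R}" and b: "b \<in> {-int R..int R}"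
    have s1: "(\<Sum>w\<in>{-N..N}. (f (w + c))^2) = S" if "\<bar>c\<bar> \<le> int R" for c
      unfolding S_def by (rule sum_shift[where B=B]) (use f that N in \<open>auto simp: fsupp_def\<close>)
    have s2: "(\<Sum>w\<in>{-N..N}. (f (w + - a) - f (w + - a + (a - b)))^2) = Q N (a - b) f"
      unfolding Q_def
      by (rule sum_shift[where B="B + 2 * int R" and f="\<lambda>w. (f w - f (w + (a - b)))^2"])
         (use f a b N in \<open>auto simp: fsupp_def\<close>)
    have "(\<Sum>w\<in>{-N..N}. f (w - a) * f (w - b))
        = (\<Sum>w\<in>{-N..N}. ((f (w + - a))^2 + (f (w + - b))^2 - (f (w + - a) - f (w + - a + (a - b)))^2) / 2)"
      by (intro sum.cong refl) (simp add: power2_eq_square algebra_simps)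
    also have "\<dots> = ((\<Sum>w\<in>{-N..N}. (f (w + - a))^2) + (\<Sum>w\<in>{-N..N}. (f (w + - b))^2)
                   - (\<Sum>w\<in>{-N..N}. (f (w + - a) - f (w + - a + (a - b)))^2)) / 2"
      by (simp only: sum_divide_distrib[symmetric] sum_subtractf[symmetric] sum.distrib[symmetric])
    also have "\<dots> = S - Q N (a - b) f / 2"
    proof -
      have "\<bar>a\<bar> \<le> int R" "\<bar>b\<bar> \<le> int R" using a b by auto
      then show ?thesis using s1[of "-a"] s1[of "-b"] s2 by simp
    qed
    finally show "p a * p b * (\<Sum>w\<in>{-N..N}. f (w - a) * f (w - b)) = p a * p b * (S - Q N (a - b) f / 2)"
      by simp
  qed
  also have "\<dots> = S * ((\<Sum>a\<in>{-int R..int R}. p a) * (\<Sum>b\<in>{-int R..int R}. p b)) - DD N f / 2"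
    unfolding DD_def
    by (simp add: sum_product right_diff_distrib sum_subtractf sum_distrib_left sum_divide_distrib algebra_simps)
  also have "\<dots> = S - DD N f / 2" using p_one by simp
  finally show ?thesis unfolding S_def .
qed

end

context walk begin

lemma Q_zero: "Q N 0 f = 0" by (simp add: Q_def)

lemma H_sub:
  assumes a: "\<forall>B f. 0 \<le> B \<longrightarrow> fsupp B f \<longrightarrow> Q (B + \<bar>a\<bar>) a f \<le> Ka * DD (B + 2 * int R) f"
    and b: "\<forall>B f. 0 \<le> B \<longrightarrow> fsupp B f \<longrightarrow> Q (B + \<bar>b\<bar>) b f \<le> Kb * DD (B + 2 * int R) f"
    and B: "0 \<le> B" and f: "fsupp B f"
  shows "Q (B + \<bar>a - b\<bar>) (a - b) f \<le> (2 * Ka + 2 * Kb) * DD (B + 2 * int R) f"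
proof -
  define N where "N = B + \<bar>a\<bar> + 2 * \<bar>b\<bar>"
  have "Q (B + \<bar>a - b\<bar>) (a - b) f = Q N (a - b) f"
    by (rule Q_win[symmetric]) (use f in \<open>auto simp: N_def\<close>)
  also have "\<dots> \<le> (\<Sum>w\<in>{-N..N}. 2 * (f w - f (w + a))^2 + 2 * (f (w + (a - b)) - f (w + (a - b) + b))^2)"
    unfolding Q_def
  proof (rule sum_mono)
    fix w
    have "(f w - f (w + (a - b)))^2 = ((f w - f (w + a)) - (f (w + (a - b)) - f (w + (a - b) + b)))^2"
      by (simp add: algebra_simps)
    also have "\<dots> \<le> 2 * (f w - f (w + a))^2 + 2 * (f (w + (a - b)) - f (w + (a - b) + b))^2"
      by (smt (verit) power2_eq_square sum_squares_bound mult_nonneg_nonneg zero_le_square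
              four_x_squared power2_diff power2_sum)
    finally show "(f w - f (w + (a - b)))^2 \<le> 2 * (f w - f (w + a))^2 + 2 * (f (w + (a - b)) - f (w + (a - b) + b))^2" .
  qed
  also have "\<dots> = 2 * Q N a f + 2 * Q N b f"
  proof -
    have "(\<Sum>w\<in>{-N..N}. (f (w + (a - b)) - f (w + (a - b) + b))^2) = Q N b f"
      unfolding Q_def
      by (rule sum_shift[where B="B + \<bar>b\<bar>" and f="\<lambda>w. (f w - f (w + b))^2"])
         (use f B in \<open>auto simp: fsupp_def N_def\<close>)
    then show ?thesis by (simp add: sum.distrib Q_def flip: sum_distrib_left)
  qed
  also have "Q N a f = Q (B + \<bar>a\<bar>) a f" by (rule Q_win) (use f in \<open>auto simp: N_def\<close>)
  also have "Q N b f = Q (B + \<bar>b\<bar>) b f" by (rule Q_win) (use f B in \<open>auto simp: N_def\<close>)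
  finally show ?thesis using a b B f by (smt (verit, best) distrib_right)
qed

lemma grad_const:
  assumes s0: "p s0 > 0" and gen: "int_subgroup_gen {(- s0) + x | x. p x > 0} = UNIV"
  shows "\<exists>K\<ge>0. \<forall>B f. 0 \<le> B \<longrightarrow> fsupp B f \<longrightarrow> Q (B + 1) 1 f \<le> K * DD (B + 2 * int R) f"
proof -
  define H where "H = {c. \<exists>K\<ge>0. \<forall>B f. 0 \<le> B \<longrightarrow> fsupp B f \<longrightarrow> Q (B + \<bar>c\<bar>) c f \<le> K * DD (B + 2 * int R) f}"
  have "0 \<in> H" unfolding H_def by (auto simp: Q_zero DD_nn)
  moreover have "\<forall>a\<in>H. \<forall>b\<in>H. a - b \<in> H"
  proof (intro ballI)
    fix a b assume "a \<in> H" "b \<in> H"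
    then obtain Ka Kb where "Ka \<ge> 0" "Kb \<ge> 0"
      and "\<forall>B f. 0 \<le> B \<longrightarrow> fsupp B f \<longrightarrow> Q (B + \<bar>a\<bar>) a f \<le> Ka * DD (B + 2 * int R) f"
      and "\<forall>B f. 0 \<le> B \<longrightarrow> fsupp B f \<longrightarrow> Q (B + \<bar>b\<bar>) b f \<le> Kb * DD (B + 2 * int R) f"
      unfolding H_def by blast
    then show "a - b \<in> H" unfolding H_def
      by (intro CollectI exI[of _ "2 * Ka + 2 * Kb"]) (auto intro: H_sub)
  qed
  moreover have "{(- s0) + x | x. p x > 0} \<subseteq> H"
  proof
    fix c assume "c \<in> {(- s0) + x | x. p x > 0}"
    then obtain x where x: "p x > 0" "c = x - s0" by auto
    have xR: "\<bar>x\<bar> \<le> int R" "\<bar>s0\<bar> \<le> int R" using x(1) s0 p_supp[of x] p_supp[of s0] by linarith+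
    show "c \<in> H" unfolding H_def
    proof (intro CollectI exI[of _ "1 / (p x * p s0)"] conjI allI impI)
      show "0 \<le> 1 / (p x * p s0)" using x s0 by simp
      fix B f assume B: "0 \<le> B" and f: "fsupp B f"
      have eqQ: "Q (B + \<bar>c\<bar>) c f = Q (B + 2 * int R) (x - s0) f"
        using Q_win[OF f, of "x - s0" "B + 2 * int R"] x xR by simp
      have "p x * p s0 * Q (B + 2 * int R) (x - s0) f
          \<le> (\<Sum>b\<in>{-int R..int R}. p x * p b * Q (B + 2 * int R) (x - b) f)"
        using xR by (intro member_le_sum[where i=s0 and f="\<lambda>b. p x * p b * Q (B + 2 * int R) (x - b) f"])
           (auto intro!: mult_nonneg_nonneg p_nn Q_nn)
      also have "\<dots> \<le> DD (B + 2 * int R) f" unfolding DD_def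
        using xR by (intro member_le_sum[where i=x and f="\<lambda>a. \<Sum>b\<in>{-int R..int R}. p a * p b * Q (B + 2 * int R) (a - b) f"])
           (auto intro!: mult_nonneg_nonneg p_nn Q_nn sum_nonneg)
      finally have "p x * p s0 * Q (B + \<bar>c\<bar>) c f \<le> DD (B + 2 * int R) f"
        unfolding eqQ .
      then show "Q (B + \<bar>c\<bar>) c f \<le> 1 / (p x * p s0) * DD (B + 2 * int R) f"
        using x(1) s0 by (simp add: field_simps)
    qed
  qed
  ultimately have "int_subgroup_gen {(- s0) + x | x. p x > 0} \<subseteq> H"
    unfolding int_subgroup_gen_def by blast
  then have "1 \<in> H" using gen by auto
  then show ?thesis unfolding H_def by auto
qed

definition NN :: "nat \<Rightarrow> real" where
  "NN i = (\<Sum>w\<in>{-(int i * int R)..int i * int R}. (PP i w)^2)"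

lemma PP_fsupp: "fsupp (int i * int R) (PP i)"
  unfolding fsupp_def using PP_supp by auto

lemma NN_step: "NN (Suc i) = NN i - DD (int i * int R + 2 * int R) (PP i) / 2"
proof -
  define N where "N = int i * int R + 3 * int R"
  have z: "\<And>w. int (Suc i) * int R < \<bar>w\<bar> \<Longrightarrow> (PP (Suc i) w)^2 = 0"
    using PP_supp[of "Suc i"] by (simp del: PP.simps)
  have "NN (Suc i) = (\<Sum>w\<in>{-N..N}. (PP (Suc i) w)^2)"
    unfolding NN_def by (rule sum_win[symmetric]) (use z in \<open>auto simp: N_def algebra_simps simp del: PP.simps\<close>)
  also have "\<dots> = (\<Sum>w\<in>{-N..N}. (\<Sum>a\<in>{-int R..int R}. p a * PP i (w - a))^2)" by simp
  also have "\<dots> = (\<Sum>w\<in>{-N..N}. (PP i w)^2) - DD N (PP i) / 2"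
    by (rule dirichlet[OF PP_fsupp]) (auto simp: N_def)
  also have "(\<Sum>w\<in>{-N..N}. (PP i w)^2) = NN i"
    unfolding NN_def by (rule sum_win) (auto simp: N_def PP_supp)
  also have "DD N (PP i) = DD (int i * int R + 2 * int R) (PP i)"
    by (rule DD_win[OF PP_fsupp]) (auto simp: N_def)
  finally show ?thesis .
qed

lemma NN_nn: "0 \<le> NN i" unfolding NN_def by (auto intro: sum_nonneg)

lemma DD_telescope: "(\<Sum>i<k. DD (int i * int R + 2 * int R) (PP i)) = 2 * (NN 0 - NN k)"
  by (induction k) (auto simp: NN_step)

lemma grad_sum:
  assumes s0: "p s0 > 0" and gen: "int_subgroup_gen {(- s0) + x | x. p x > 0} = UNIV"
  shows "\<exists>C\<ge>0. \<forall>k N. int k * int R + 1 \<le> N \<longrightarrow>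
      (\<Sum>i<k. \<Sum>z\<in>{-N..N}. (PP i z - PP i (z + 1))^2) \<le> C"
proof -
  obtain K where K: "K \<ge> 0" "\<And>B f. 0 \<le> B \<Longrightarrow> fsupp B f \<Longrightarrow> Q (B + 1) 1 f \<le> K * DD (B + 2 * int R) f"
    using grad_const[OF s0 gen] by blast
  have NN0: "NN 0 = 1" by (simp add: NN_def)
  show ?thesis
  proof (intro exI[of _ "2 * K"] conjI allI impI)
    show "0 \<le> 2 * K" using K by simp
    fix k N assume kN: "int k * int R + 1 \<le> N"
    have "(\<Sum>i<k. \<Sum>z\<in>{-N..N}. (PP i z - PP i (z + 1))^2) = (\<Sum>i<k. Q (int i * int R + 1) 1 (PP i))"
    proof (intro sum.cong refl)
      fix i assume i: "i \<in> {..<k}"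
      have "int i * int R \<le> int k * int R" using i by (simp add: mult_right_mono)
      then have "Q N 1 (PP i) = Q (int i * int R + \<bar>1\<bar>) 1 (PP i)"
        using kN by (intro Q_win[OF PP_fsupp]) simp
      then show "(\<Sum>z\<in>{-N..N}. (PP i z - PP i (z + 1))^2) = Q (int i * int R + 1) 1 (PP i)"
        by (simp add: Q_def)
    qed
    also have "\<dots> \<le> (\<Sum>i<k. K * DD (int i * int R + 2 * int R) (PP i))"
      by (intro sum_mono K(2) PP_fsupp) auto
    also have "\<dots> = K * (2 * (NN 0 - NN k))" by (simp add: sum_distrib_left[symmetric] DD_telescope)
    also have "\<dots> \<le> 2 * K" using NN0 NN_nn[of k] K by (simp add: mult_left_le algebra_simps)
    finally show "(\<Sum>i<k. \<Sum>z\<in>{-N..N}. (PP i z - PP i (z + 1))^2) \<le> 2 * K" .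
  qed
qed

end

lemma pow_abs_le: fixes x :: real assumes "q \<le> n" shows "\<bar>x\<bar>^q \<le> 1 + \<bar>x\<bar>^n"
proof (cases "\<bar>x\<bar> \<le> 1")
  case True
  then have "\<bar>x\<bar>^q \<le> 1" by (simp add: power_le_one)
  then show ?thesis by (smt (verit) zero_le_power abs_ge_zero)
next
  case False
  then have "\<bar>x\<bar>^q \<le> \<bar>x\<bar>^n" by (intro power_increasing assms) auto
  then show ?thesis by simp
qed

lemma pow_abs_le_even: fixes x :: real assumes "q \<le> 2 * m" shows "\<bar>x\<bar>^q \<le> 1 + x^(2 * m)"
  using pow_abs_le[OF assms, of x] by (simp add: power_even_abs)

lemma abs_add_pow: fixes a b :: real shows "\<bar>a + b\<bar>^n \<le> 2^n * (\<bar>a\<bar>^n + \<bar>b\<bar>^n)"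
proof -
  have "\<bar>a + b\<bar> \<le> 2 * max \<bar>a\<bar> \<bar>b\<bar>" by auto
  then have "\<bar>a + b\<bar>^n \<le> (2 * max \<bar>a\<bar> \<bar>b\<bar>)^n" by (intro power_mono) auto
  also have "\<dots> = 2^n * (max \<bar>a\<bar> \<bar>b\<bar>)^n" by (simp add: power_mult_distrib)
  also have "(max \<bar>a\<bar> \<bar>b\<bar>)^n \<le> \<bar>a\<bar>^n + \<bar>b\<bar>^n" by (cases "\<bar>a\<bar> \<le> \<bar>b\<bar>") (auto simp: max_def)
  finally show ?thesis by simp
qed

context prob_space begin

lemma integrable_pow_le:
  fixes f :: "'a \<Rightarrow> real"
  assumes "integrable M (\<lambda>\<omega>. \<bar>f \<omega>\<bar>^n)" "f \<in> borel_measurable M" "q \<le> n"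
  shows "integrable M (\<lambda>\<omega>. \<bar>f \<omega>\<bar>^q)" "integrable M (\<lambda>\<omega>. f \<omega>^q)"
proof -
  have i: "integrable M (\<lambda>\<omega>. 1 + \<bar>f \<omega>\<bar>^n)" using assms(1) by simp
  show "integrable M (\<lambda>\<omega>. \<bar>f \<omega>\<bar>^q)"
    by (rule Bochner_Integration.integrable_bound[OF i]) (use assms(2) pow_abs_le[OF assms(3)] in auto)
  show "integrable M (\<lambda>\<omega>. f \<omega>^q)"
    by (rule Bochner_Integration.integrable_bound[OF i]) (use assms(2) pow_abs_le[OF assms(3)] in \<open>auto simp: power_abs\<close>)
qed

lemma integrable_sum_pow:
  fixes Y :: "'i \<Rightarrow> 'a \<Rightarrow> real"
  assumes "finite J" "\<And>i. i \<in> J \<Longrightarrow> Y i \<in> borel_measurable M"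
    "\<And>i. i \<in> J \<Longrightarrow> integrable M (\<lambda>\<omega>. \<bar>Y i \<omega>\<bar>^n)"
  shows "integrable M (\<lambda>\<omega>. \<bar>\<Sum>i\<in>J. Y i \<omega>\<bar>^n)"
  using assms
proof (induction J rule: finite_induct)
  case empty
  then show ?case by (cases n) auto
next
  case (insert j J)
  have i: "integrable M (\<lambda>\<omega>. 2^n * (\<bar>Y j \<omega>\<bar>^n + \<bar>\<Sum>i\<in>J. Y i \<omega>\<bar>^n))"
    using insert by auto
  show ?case
    by (rule Bochner_Integration.integrable_bound[OF i]) (use insert abs_add_pow in auto)
qed

end

context prob_space begin

lemma moment_step:
  fixes Y :: "'i \<Rightarrow> 'a \<Rightarrow> real"
  assumes I: "finite I" and ind: "indep_vars (\<lambda>_. borel) Y I"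
    and meas: "\<And>i. i \<in> I \<Longrightarrow> Y i \<in> borel_measurable M"
    and int12: "\<And>i. i \<in> I \<Longrightarrow> integrable M (\<lambda>\<omega>. \<bar>Y i \<omega>\<bar>^12)"
    and mean: "\<And>i. i \<in> I \<Longrightarrow> expectation (Y i) = 0"
    and mom: "\<And>i r. i \<in> I \<Longrightarrow> 2 \<le> r \<Longrightarrow> r \<le> 12 \<Longrightarrow> expectation (\<lambda>\<omega>. \<bar>Y i \<omega>\<bar>^r) \<le> v i"
    and vnn: "\<And>i. i \<in> I \<Longrightarrow> 0 \<le> v i"
    and l: "2 * Suc m \<le> 12"
    and prev: "\<And>J. J \<subseteq> I \<Longrightarrow> expectation (\<lambda>\<omega>. (\<Sum>i\<in>J. Y i \<omega>)^(2*m)) \<le> A"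
    and JI0: "J \<subseteq> I"
  shows "expectation (\<lambda>\<omega>. (\<Sum>i\<in>J. Y i \<omega>)^(2 * Suc m)) \<le> (\<Sum>i\<in>J. v i) * 2^(2 * Suc m) * (1 + A)"
proof -
  have "finite J" using JI0 I by (rule finite_subset)
  then show ?thesis using JI0
  proof (induction J rule: finite_induct)
    case empty
    then show ?case by simp
  next
    case (insert j J)
    define n where "n = 2 * Suc m"
    define S where "S = (\<lambda>\<omega>. \<Sum>i\<in>J. Y i \<omega>)"
    have jI: "j \<in> I" and JI: "J \<subseteq> I" using insert by auto
    have finJ: "finite J" using insert by simp
    have Smeas: "S \<in> borel_measurable M" unfolding S_def using meas JI by (intro borel_measurable_sum) auto
    have S12: "integrable M (\<lambda>\<omega>. \<bar>S \<omega>\<bar>^12)" unfolding S_def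
      by (rule integrable_sum_pow) (use finJ meas int12 JI in auto)
    have Sint: "integrable M (\<lambda>\<omega>. S \<omega>^q)" "integrable M (\<lambda>\<omega>. \<bar>S \<omega>\<bar>^q)" if "q \<le> 12" for q
      using integrable_pow_le[OF S12 Smeas that] by auto
    have Yint: "integrable M (\<lambda>\<omega>. Y j \<omega>^q)" "integrable M (\<lambda>\<omega>. \<bar>Y j \<omega>\<bar>^q)" if "q \<le> 12" for q
      using integrable_pow_le[OF int12[OF jI] meas[OF jI] that] by auto
    have indYS: "indep_var borel (Y j) borel S"
      unfolding S_def
      by (rule indep_vars_sum) (use insert ind in \<open>auto intro: indep_vars_subset\<close>)
    have indk: "indep_var borel (\<lambda>\<omega>. Y j \<omega>^k) borel (\<lambda>\<omega>. S \<omega>^q)" for k q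
      using indep_var_compose[OF indYS, of "\<lambda>x. x^k" borel "\<lambda>x. x^q" borel]
      by (simp add: comp_def)
    have expand: "(\<lambda>\<omega>. (\<Sum>i\<in>insert j J. Y i \<omega>)^n) = (\<lambda>\<omega>. \<Sum>k\<le>n. of_nat (n choose k) * (Y j \<omega>^k * S \<omega>^(n-k)))"
      using insert by (auto simp: S_def binomial_ring mult.assoc)
    have term_int: "integrable M (\<lambda>\<omega>. Y j \<omega>^k * S \<omega>^(n-k))" if "k \<le> n" for k
      using that l by (intro indep_var_integrable[OF indk] Yint Sint) (auto simp: n_def)
    have term_eq: "expectation (\<lambda>\<omega>. Y j \<omega>^k * S \<omega>^(n-k)) = expectation (\<lambda>\<omega>. Y j \<omega>^k) * expectation (\<lambda>\<omega>. S \<omega>^(n-k))"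
      if "k \<le> n" for k
      using that l by (intro indep_var_lebesgue_integral[OF indk] Yint Sint) (auto simp: n_def)
    have SA: "expectation (\<lambda>\<omega>. S \<omega>^(2*m)) \<le> A" unfolding S_def by (rule prev[OF JI])
    have Aeq: "0 \<le> 1 + A"
    proof -
      have "0 \<le> expectation (\<lambda>\<omega>. S \<omega>^(2*m))" by (intro integral_nonneg_AE) (auto simp: zero_le_even_power)
      then show ?thesis using SA by linarith
    qed
    have bound: "of_nat (n choose k) * expectation (\<lambda>\<omega>. Y j \<omega>^k * S \<omega>^(n-k))
        \<le> (if k = 0 then expectation (\<lambda>\<omega>. S \<omega>^n) else 0) + of_nat (n choose k) * (v j * (1 + A))"
      if "k \<le> n" for k
    proof (cases "k = 0")
      case True
      have "0 \<le> of_nat (n choose k) * (v j * (1 + A))" using vnn[OF jI] Aeq by simp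
      then show ?thesis using True by simp
    next
      case k0: False
      show ?thesis
      proof (cases "k = 1")
        case True
        then show ?thesis using term_eq[OF that] mean[OF jI] vnn[OF jI] Aeq by simp
      next
        case False
        with k0 have k2: "2 \<le> k" by simp
        have kn: "k \<le> 12" using that l by (simp add: n_def)
        have e1: "\<bar>expectation (\<lambda>\<omega>. Y j \<omega>^k)\<bar> \<le> v j"
        proof -
          have "\<bar>expectation (\<lambda>\<omega>. Y j \<omega>^k)\<bar> \<le> expectation (\<lambda>\<omega>. \<bar>Y j \<omega>^k\<bar>)"
            by (rule integral_abs_bound)
          also have "\<dots> = expectation (\<lambda>\<omega>. \<bar>Y j \<omega>\<bar>^k)" by (simp add: power_abs)
          also have "\<dots> \<le> v j" by (rule mom[OF jI k2 kn])
          finally show ?thesis .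
        qed
        have qm: "n - k \<le> 2 * m" using k2 by (simp add: n_def)
        have e2: "\<bar>expectation (\<lambda>\<omega>. S \<omega>^(n-k))\<bar> \<le> 1 + A"
        proof -
          have "\<bar>expectation (\<lambda>\<omega>. S \<omega>^(n-k))\<bar> \<le> expectation (\<lambda>\<omega>. \<bar>S \<omega>^(n-k)\<bar>)"
            by (rule integral_abs_bound)
          also have "\<dots> \<le> expectation (\<lambda>\<omega>. 1 + S \<omega>^(2*m))"
          proof (rule integral_mono)
            show "integrable M (\<lambda>\<omega>. \<bar>S \<omega>^(n-k)\<bar>)" using Sint(2)[of "n-k"] qm l by (simp add: power_abs)
            show "integrable M (\<lambda>\<omega>. 1 + S \<omega>^(2*m))" using Sint(1)[of "2*m"] l by simp
            show "\<bar>S \<omega>^(n-k)\<bar> \<le> 1 + S \<omega>^(2*m)" for \<omega> using pow_abs_le_even[OF qm] by (simp add: power_abs)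
          qed
          also have "\<dots> = 1 + expectation (\<lambda>\<omega>. S \<omega>^(2*m))"
          proof -
            have "integrable M (\<lambda>\<omega>. S \<omega>^(2*m))" using Sint(1)[of "2*m"] l by simp
            then show ?thesis by (simp add: prob_space)
          qed
          also have "\<dots> \<le> 1 + A" using SA by simp
          finally show ?thesis .
        qed
        have "expectation (\<lambda>\<omega>. Y j \<omega>^k * S \<omega>^(n-k)) \<le> v j * (1 + A)"
        proof -
          have "expectation (\<lambda>\<omega>. Y j \<omega>^k * S \<omega>^(n-k))
              \<le> \<bar>expectation (\<lambda>\<omega>. Y j \<omega>^k)\<bar> * \<bar>expectation (\<lambda>\<omega>. S \<omega>^(n-k))\<bar>"
            using term_eq[OF that] by (simp add: abs_mult[symmetric])
          also have "\<dots> \<le> v j * (1 + A)" using vnn[OF jI] by (intro mult_mono e1 e2) auto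
          finally show ?thesis .
        qed
        then have "of_nat (n choose k) * expectation (\<lambda>\<omega>. Y j \<omega>^k * S \<omega>^(n-k)) \<le> of_nat (n choose k) * (v j * (1 + A))"
          by (intro mult_left_mono) auto
        then show ?thesis using k0 by simp
      qed
    qed
    have "expectation (\<lambda>\<omega>. (\<Sum>i\<in>insert j J. Y i \<omega>)^n)
        = (\<Sum>k\<le>n. of_nat (n choose k) * expectation (\<lambda>\<omega>. Y j \<omega>^k * S \<omega>^(n-k)))"
      unfolding expand
    proof -
      have "expectation (\<lambda>\<omega>. \<Sum>k\<le>n. of_nat (n choose k) * (Y j \<omega>^k * S \<omega>^(n-k)))
          = (\<Sum>k\<le>n. expectation (\<lambda>\<omega>. of_nat (n choose k) * (Y j \<omega>^k * S \<omega>^(n-k))))"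
        by (rule Bochner_Integration.integral_sum) (auto intro!: term_int)
      then show "expectation (\<lambda>\<omega>. \<Sum>k\<le>n. of_nat (n choose k) * (Y j \<omega>^k * S \<omega>^(n-k)))
          = (\<Sum>k\<le>n. of_nat (n choose k) * expectation (\<lambda>\<omega>. Y j \<omega>^k * S \<omega>^(n-k)))" by simp
    qed
    also have "\<dots> \<le> (\<Sum>k\<le>n. (if k = 0 then expectation (\<lambda>\<omega>. S \<omega>^n) else 0) + of_nat (n choose k) * (v j * (1 + A)))"
      by (intro sum_mono bound) auto
    also have "\<dots> = expectation (\<lambda>\<omega>. S \<omega>^n) + 2^n * (v j * (1 + A))"
    proof -
      have "(\<Sum>k\<le>n. real (n choose k)) = 2^n"
        using choose_row_sum[of n] by (metis of_nat_numeral of_nat_power of_nat_sum)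
      then show ?thesis by (simp add: sum.distrib sum_distrib_right[symmetric])
    qed
    also have "\<dots> \<le> (\<Sum>i\<in>J. v i) * 2^n * (1 + A) + 2^n * (v j * (1 + A))"
      using insert unfolding S_def n_def by simp
    also have "\<dots> = (\<Sum>i\<in>insert j J. v i) * 2^n * (1 + A)"
      using insert by (simp add: algebra_simps)
    finally show ?case unfolding n_def .
  qed
qed

end

fun Cm :: "nat \<Rightarrow> real" where
  "Cm 0 = 1"
| "Cm (Suc m) = 4^(Suc m) * (1 + Cm m)"

lemma Cm_nn: "0 \<le> Cm m" by (induction m) auto

context prob_space begin

lemma moment_bound:
  fixes Y :: "'i \<Rightarrow> 'a \<Rightarrow> real"
  assumes I: "finite I" and ind: "indep_vars (\<lambda>_. borel) Y I"
    and meas: "\<And>i. i \<in> I \<Longrightarrow> Y i \<in> borel_measurable M"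
    and int12: "\<And>i. i \<in> I \<Longrightarrow> integrable M (\<lambda>\<omega>. \<bar>Y i \<omega>\<bar>^12)"
    and mean: "\<And>i. i \<in> I \<Longrightarrow> expectation (Y i) = 0"
    and mom: "\<And>i r. i \<in> I \<Longrightarrow> 2 \<le> r \<Longrightarrow> r \<le> 12 \<Longrightarrow> expectation (\<lambda>\<omega>. \<bar>Y i \<omega>\<bar>^r) \<le> v i"
    and vnn: "\<And>i. i \<in> I \<Longrightarrow> 0 \<le> v i"
  shows "expectation (\<lambda>\<omega>. (\<Sum>i\<in>I. Y i \<omega>)^12) \<le> Cm 6 * (1 + (\<Sum>i\<in>I. v i))^6"
proof -
  define U where "U = 1 + (\<Sum>i\<in>I. v i)"
  have U1: "1 \<le> U" unfolding U_def using vnn by (simp add: sum_nonneg)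
  have "\<forall>J. J \<subseteq> I \<longrightarrow> expectation (\<lambda>\<omega>. (\<Sum>i\<in>J. Y i \<omega>)^(2*m)) \<le> Cm m * U^m" if "m \<le> 6" for m
    using that
  proof (induction m)
    case 0
    then show ?case by (simp add: prob_space)
  next
    case (Suc m)
    show ?case
    proof (intro allI impI)
      fix J assume JI: "J \<subseteq> I"
      have "expectation (\<lambda>\<omega>. (\<Sum>i\<in>J. Y i \<omega>)^(2 * Suc m)) \<le> (\<Sum>i\<in>J. v i) * 2^(2 * Suc m) * (1 + Cm m * U^m)"
        by (rule moment_step[OF I ind meas int12 mean mom vnn]) (use Suc JI in auto)
      also have "\<dots> \<le> U * 4^(Suc m) * ((1 + Cm m) * U^m)"
      proof (intro mult_mono)
        show "(\<Sum>i\<in>J. v i) \<le> U" unfolding U_def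
          using sum_mono2[OF I JI, of v] vnn by simp
        show "(2::real)^(2 * Suc m) \<le> 4^(Suc m)" by (simp add: power_mult)
        have "1 \<le> U^m" using U1 by (simp add: one_le_power)
        then show "1 + Cm m * U^m \<le> (1 + Cm m) * U^m" by (simp add: algebra_simps)
      qed (use U1 Cm_nn[of m] vnn JI in \<open>auto intro!: sum_nonneg mult_nonneg_nonneg\<close>)
      also have "\<dots> = Cm (Suc m) * U^(Suc m)" by (simp add: algebra_simps)
      finally show "expectation (\<lambda>\<omega>. (\<Sum>i\<in>J. Y i \<omega>)^(2 * Suc m)) \<le> Cm (Suc m) * U^(Suc m)" .
    qed
  qed
  from this[of 6] show ?thesis unfolding U_def by simp
qed

end

context walk begin

lemma conv:
  fixes f g :: "int \<Rightarrow> real"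
  assumes f: "\<And>z. \<bar>z\<bar> > N' \<Longrightarrow> f z = 0" and N: "N' + int R \<le> N"
  shows "(\<Sum>a\<in>{-int R..int R}. p a * (\<Sum>z\<in>{-N'..N'}. f z * g (a + z)))
       = (\<Sum>w\<in>{-N..N}. (\<Sum>a\<in>{-int R..int R}. p a * f (w - a)) * g w)"
proof -
  have "(\<Sum>z\<in>{-N'..N'}. f z * g (a + z)) = (\<Sum>w\<in>{-N..N}. f (w - a) * g w)"
    if a: "a \<in> {-int R..int R}" for a
  proof -
    have "(\<Sum>z\<in>{-N'..N'}. f z * g (a + z)) = (\<Sum>z\<in>{-N..N}. f z * g (a + z))"
      by (rule sum_win[symmetric]) (use f N a in auto)
    also have "\<dots> = (\<Sum>w\<in>{-N..N}. f (w + - a) * g (a + (w + - a)))"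
      by (rule sum_shift[where B=N' and f="\<lambda>z. f z * g (a + z)", symmetric]) (use f N a in auto)
    finally show ?thesis by simp
  qed
  then have "(\<Sum>a\<in>{-int R..int R}. p a * (\<Sum>z\<in>{-N'..N'}. f z * g (a + z)))
      = (\<Sum>a\<in>{-int R..int R}. p a * (\<Sum>w\<in>{-N..N}. f (w - a) * g w))" by simp
  also have "\<dots> = (\<Sum>w\<in>{-N..N}. (\<Sum>a\<in>{-int R..int R}. p a * f (w - a)) * g w)"
    by (simp add: sum_distrib_left sum_distrib_right sum.swap[of _ "{-N..N}"] mult.assoc)
  finally show ?thesis .
qed

lemma PP0_sum: assumes "0 \<le> N" shows "(\<Sum>z\<in>{-N..N}. PP 0 z * f z) = f 0"
proof -
  have "(\<Sum>z\<in>{-N..N}. PP 0 z * f z) = (\<Sum>z\<in>{-N..N}. if z = 0 then f z else 0)"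
    by (intro sum.cong) auto
  then show ?thesis using assms by simp
qed

lemma h_formula:
  fixes h :: "nat \<Rightarrow> int \<Rightarrow> real" and X :: "int \<Rightarrow> int \<Rightarrow> real"
  assumes step: "\<And>t x. h (Suc t) x = (\<Sum>a\<in>{-int R..int R}. p a * h t (x + a)) + X (int t + 1) x"
  shows "int k * int R \<le> N \<Longrightarrow> h k x = (\<Sum>z\<in>{-N..N}. PP k z * h 0 (x + z))
           + (\<Sum>j\<in>{1..k}. \<Sum>z\<in>{-N..N}. PP (k - j) z * X (int j) (x + z))"
proof (induction k arbitrary: x N)
  case 0
  have "0 \<le> N" using 0 by simp
  then show ?case using PP0_sum[of N "\<lambda>z. h 0 (x + z)"] by simp
next
  case (Suc k)
  define N' where "N' = N - int R"
  have N': "int k * int R \<le> N'" using Suc.prems by (simp add: N'_def algebra_simps)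
  have IH: "h k (x + a) = (\<Sum>z\<in>{-N'..N'}. PP k z * h 0 (x + a + z))
           + (\<Sum>j\<in>{1..k}. \<Sum>z\<in>{-N'..N'}. PP (k - j) z * X (int j) (x + a + z))" for a
    using Suc.IH[OF N'] .
  have A: "(\<Sum>a\<in>{-int R..int R}. p a * (\<Sum>z\<in>{-N'..N'}. PP k z * h 0 (x + a + z)))
      = (\<Sum>w\<in>{-N..N}. PP (Suc k) w * h 0 (x + w))"
  proof -
    have "(\<Sum>a\<in>{-int R..int R}. p a * (\<Sum>z\<in>{-N'..N'}. PP k z * (\<lambda>v. h 0 (x + v)) (a + z)))
      = (\<Sum>w\<in>{-N..N}. (\<Sum>a\<in>{-int R..int R}. p a * PP k (w - a)) * (\<lambda>v. h 0 (x + v)) w)"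
      by (rule conv) (use N' PP_supp in \<open>auto simp: N'_def intro: PP_supp order.strict_trans1\<close>)
    then show ?thesis by (simp add: add.assoc)
  qed
  have B: "(\<Sum>a\<in>{-int R..int R}. p a * (\<Sum>z\<in>{-N'..N'}. PP (k - j) z * X (int j) (x + a + z)))
      = (\<Sum>w\<in>{-N..N}. PP (Suc k - j) w * X (int j) (x + w))" if j: "j \<in> {1..k}" for j
  proof -
    have sk: "Suc k - j = Suc (k - j)" using j by auto
    have supp: "PP (k - j) z = 0" if "\<bar>z\<bar> > N'" for z
    proof -
      have "int (k - j) * int R \<le> int k * int R" using j by (simp add: mult_right_mono)
      then show ?thesis using that N' by (intro PP_supp) linarith
    qed
    have "(\<Sum>a\<in>{-int R..int R}. p a * (\<Sum>z\<in>{-N'..N'}. PP (k - j) z * (\<lambda>v. X (int j) (x + v)) (a + z)))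
      = (\<Sum>w\<in>{-N..N}. (\<Sum>a\<in>{-int R..int R}. p a * PP (k - j) (w - a)) * (\<lambda>v. X (int j) (x + v)) w)"
      by (rule conv) (use supp in \<open>auto simp: N'_def\<close>)
    then show ?thesis by (simp add: add.assoc sk)
  qed
  have N0: "0 \<le> N" using Suc.prems by (smt (verit) of_nat_0_le_iff mult_nonneg_nonneg)
  have C: "(\<Sum>z\<in>{-N..N}. PP (Suc k - Suc k) z * X (int (Suc k)) (x + z)) = X (int k + 1) x"
    using N0 PP0_sum[of N "\<lambda>z. X (int (Suc k)) (x + z)"] by (simp add: add.commute)
  have "h (Suc k) x = (\<Sum>a\<in>{-int R..int R}. p a * h k (x + a)) + X (int k + 1) x" by (rule step)
  also have "\<dots> = (\<Sum>a\<in>{-int R..int R}. p a * (\<Sum>z\<in>{-N'..N'}. PP k z * h 0 (x + a + z)))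
      + (\<Sum>j\<in>{1..k}. \<Sum>a\<in>{-int R..int R}. p a * (\<Sum>z\<in>{-N'..N'}. PP (k - j) z * X (int j) (x + a + z)))
      + X (int k + 1) x"
    by (simp add: IH distrib_left sum.distrib sum_distrib_left) (rule sum.swap)
  also have "\<dots> = (\<Sum>w\<in>{-N..N}. PP (Suc k) w * h 0 (x + w))
      + (\<Sum>j\<in>{1..k}. \<Sum>w\<in>{-N..N}. PP (Suc k - j) w * X (int j) (x + w))
      + (\<Sum>z\<in>{-N..N}. PP (Suc k - Suc k) z * X (int (Suc k)) (x + z))"
    using A B C by simp
  also have "\<dots> = (\<Sum>w\<in>{-N..N}. PP (Suc k) w * h 0 (x + w))
      + (\<Sum>j\<in>{1..Suc k}. \<Sum>w\<in>{-N..N}. PP (Suc k - j) w * X (int j) (x + w))"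
    by (simp add: atLeastAtMostSuc_conv add.assoc)
  finally show ?case .
qed

end

context walk begin

lemma incr_formula:
  fixes h :: "nat \<Rightarrow> int \<Rightarrow> real" and X :: "int \<Rightarrow> int \<Rightarrow> real"
  assumes step: "\<And>t x. h (Suc t) x = (\<Sum>a\<in>{-int R..int R}. p a * h t (x + a)) + X (int t + 1) x"
    and N: "int k * int R + 2 \<le> N"
  shows "h k x - h k (x - 1) = (\<Sum>z\<in>{-N..N}. PP k z * (h 0 (x + z) - h 0 (x + z - 1)))
           + (\<Sum>j\<in>{1..k}. \<Sum>z\<in>{-N..N}. (PP (k - j) z - PP (k - j) (z + 1)) * X (int j) (x + z))"
proof -
  have N1: "int k * int R \<le> N" using N by simp
  have sh: "(\<Sum>z\<in>{-N..N}. PP (k - j) z * X (int j) (x - 1 + z)) = (\<Sum>z\<in>{-N..N}. PP (k - j) (z + 1) * X (int j) (x + z))"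
    if j: "j \<in> {1..k}" for j
  proof -
    have le: "int (k - j) * int R \<le> int k * int R" by (simp add: mult_right_mono)
    have "(\<Sum>z\<in>{-N..N}. PP (k - j) (z + 1) * X (int j) (x + z))
        = (\<Sum>z\<in>{-N..N}. (\<lambda>z. PP (k - j) (z + 1) * X (int j) (x + z)) (z + - 1))"
    proof (rule sum_shift[symmetric, where B="int (k - j) * int R + 1"])
      fix z :: int assume "int (k - j) * int R + 1 < \<bar>z\<bar>"
      then have "int (k - j) * int R < \<bar>z + 1\<bar>" by linarith
      then show "PP (k - j) (z + 1) * X (int j) (x + z) = 0" using PP_supp by simp
    qed (use N le in auto)
    then show ?thesis by (simp add: algebra_simps)
  qed
  have "h k x - h k (x - 1) = ((\<Sum>z\<in>{-N..N}. PP k z * h 0 (x + z)) - (\<Sum>z\<in>{-N..N}. PP k z * h 0 (x - 1 + z)))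
      + ((\<Sum>j\<in>{1..k}. \<Sum>z\<in>{-N..N}. PP (k - j) z * X (int j) (x + z))
         - (\<Sum>j\<in>{1..k}. \<Sum>z\<in>{-N..N}. PP (k - j) z * X (int j) (x - 1 + z)))"
    using h_formula[OF step N1, of x] h_formula[OF step N1, of "x - 1"] by simp
  also have "\<dots> = (\<Sum>z\<in>{-N..N}. PP k z * (h 0 (x + z) - h 0 (x + z - 1)))
           + (\<Sum>j\<in>{1..k}. \<Sum>z\<in>{-N..N}. (PP (k - j) z - PP (k - j) (z + 1)) * X (int j) (x + z))"
  proof -
    have eq1: "(\<Sum>z\<in>{-N..N}. PP k z * h 0 (x + z)) - (\<Sum>z\<in>{-N..N}. PP k z * h 0 (x - 1 + z))
        = (\<Sum>z\<in>{-N..N}. PP k z * (h 0 (x + z) - h 0 (x + z - 1)))"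
      by (simp add: sum_subtractf[symmetric] right_diff_distrib algebra_simps)
    have eq2: "(\<Sum>j\<in>{1..k}. \<Sum>z\<in>{-N..N}. PP (k - j) z * X (int j) (x - 1 + z))
        = (\<Sum>j\<in>{1..k}. \<Sum>z\<in>{-N..N}. PP (k - j) (z + 1) * X (int j) (x + z))"
      by (rule sum.cong[OF refl sh])
    have eq3: "(\<Sum>j\<in>{1..k}. \<Sum>z\<in>{-N..N}. PP (k - j) z * X (int j) (x + z))
         - (\<Sum>j\<in>{1..k}. \<Sum>z\<in>{-N..N}. PP (k - j) (z + 1) * X (int j) (x + z))
       = (\<Sum>j\<in>{1..k}. \<Sum>z\<in>{-N..N}. (PP (k - j) z - PP (k - j) (z + 1)) * X (int j) (x + z))"
      by (simp add: sum_subtractf[symmetric] left_diff_distrib)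
    show ?thesis using eq1 eq2 eq3 by simp
  qed
  finally show ?thesis .
qed

end

lemma same_distr:
  fixes X Y :: "'a \<Rightarrow> real" and g :: "real \<Rightarrow> real"
  assumes d: "distr M borel X = distr M borel Y"
    and X: "X \<in> borel_measurable M" and Y: "Y \<in> borel_measurable M" and g: "g \<in> borel_measurable borel"
  shows "integrable M (\<lambda>\<omega>. g (X \<omega>)) \<longleftrightarrow> integrable M (\<lambda>\<omega>. g (Y \<omega>))"
    and "integral\<^sup>L M (\<lambda>\<omega>. g (X \<omega>)) = integral\<^sup>L M (\<lambda>\<omega>. g (Y \<omega>))"
proof -
  show "integrable M (\<lambda>\<omega>. g (X \<omega>)) \<longleftrightarrow> integrable M (\<lambda>\<omega>. g (Y \<omega>))"
    using integrable_distr_eq[OF X g] integrable_distr_eq[OF Y g] d by simp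
  show "integral\<^sup>L M (\<lambda>\<omega>. g (X \<omega>)) = integral\<^sup>L M (\<lambda>\<omega>. g (Y \<omega>))"
    using integral_distr[OF X g] integral_distr[OF Y g] d by simp
qed

locale xisetup = prob_space M for M :: "'a measure" +
  fixes xi :: "int \<Rightarrow> int \<Rightarrow> 'a \<Rightarrow> real"
  assumes xi_meas: "\<And>t x. xi t x \<in> borel_measurable M"
    and xi_indep: "indep_vars (\<lambda>_. borel) (\<lambda>(t, x). xi t x) UNIV"
    and xi_ident: "\<And>t x. distr M borel (xi t x) = distr M borel (xi 0 0)"
    and xi_int: "integrable M (xi 0 0)"
    and xi_mean: "expectation (xi 0 0) = 0"
    and xi_mom: "integrable M (\<lambda>\<omega>. (xi 0 0 \<omega>) ^ 12)"
begin

definition mxi :: real where "mxi = 1 + expectation (\<lambda>\<omega>. \<bar>xi 0 0 \<omega>\<bar>^12)"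

lemma xi12: "integrable M (\<lambda>\<omega>. \<bar>xi t x \<omega>\<bar>^12)"
proof -
  have "integrable M (\<lambda>\<omega>. \<bar>xi 0 0 \<omega>\<bar>^12)" using xi_mom by (simp add: power_even_abs)
  then show ?thesis using same_distr(1)[OF xi_ident[of t x] xi_meas xi_meas, of "\<lambda>v. \<bar>v\<bar>^12"] by simp
qed

lemma xi_mean_all: "expectation (xi t x) = 0"
  using same_distr(2)[OF xi_ident[of t x] xi_meas xi_meas, of "\<lambda>v. v"] xi_mean by simp

lemma xi_mom_all: assumes "r \<le> 12" shows "integrable M (\<lambda>\<omega>. \<bar>xi t x \<omega>\<bar>^r)"
    and "expectation (\<lambda>\<omega>. \<bar>xi t x \<omega>\<bar>^r) \<le> mxi"
proof -
  show i: "integrable M (\<lambda>\<omega>. \<bar>xi t x \<omega>\<bar>^r)" by (rule integrable_pow_le(1)[OF xi12 xi_meas assms])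
  have "expectation (\<lambda>\<omega>. \<bar>xi t x \<omega>\<bar>^r) \<le> expectation (\<lambda>\<omega>. 1 + \<bar>xi t x \<omega>\<bar>^12)"
    by (intro integral_mono i pow_abs_le assms) (use xi12 in auto)
  also have "\<dots> = 1 + expectation (\<lambda>\<omega>. \<bar>xi t x \<omega>\<bar>^12)" using xi12 by (simp add: prob_space)
  also have "expectation (\<lambda>\<omega>. \<bar>xi t x \<omega>\<bar>^12) = expectation (\<lambda>\<omega>. \<bar>xi 0 0 \<omega>\<bar>^12)"
    using same_distr(2)[OF xi_ident[of t x] xi_meas xi_meas, of "\<lambda>v. \<bar>v\<bar>^12"] by simp
  finally show "expectation (\<lambda>\<omega>. \<bar>xi t x \<omega>\<bar>^r) \<le> mxi" unfolding mxi_def by simp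
qed

lemma mxi_pos: "1 \<le> mxi" unfolding mxi_def by (simp add: integral_nonneg_AE)

lemma xi_sum_bound:
  fixes I :: "(int \<times> int) set" and c :: "int \<times> int \<Rightarrow> real"
  assumes I: "finite I" and c1: "\<And>i. i \<in> I \<Longrightarrow> \<bar>c i\<bar> \<le> 1" and V: "(\<Sum>i\<in>I. (c i)^2) \<le> V"
  shows "integrable M (\<lambda>\<omega>. (\<Sum>i\<in>I. c i * xi (fst i) (snd i) \<omega>)^12)"
    and "expectation (\<lambda>\<omega>. (\<Sum>i\<in>I. c i * xi (fst i) (snd i) \<omega>)^12) \<le> Cm 6 * (1 + mxi * V)^6"
proof -
  define Y where "Y i \<omega> = c i * xi (fst i) (snd i) \<omega>" for i \<omega>
  have Ymeas: "Y i \<in> borel_measurable M" for i unfolding Y_def using xi_meas by simp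
  have ind: "indep_vars (\<lambda>_. borel) Y I"
  proof -
    have "indep_vars (\<lambda>_. borel) (\<lambda>(t, x). xi t x) I" by (rule indep_vars_subset[OF xi_indep]) auto
    then have "indep_vars (\<lambda>_. borel) (\<lambda>i \<omega>. (\<lambda>v. c i * v) ((\<lambda>(t, x). xi t x) i \<omega>)) I"
      by (rule indep_vars_compose2) auto
    then show ?thesis by (rule indep_vars_cong[THEN iffD1, rotated 3]) (auto simp: Y_def split: prod.splits)
  qed
  have Y12: "integrable M (\<lambda>\<omega>. \<bar>Y i \<omega>\<bar>^12)" for i
    unfolding Y_def using xi12[of "fst i" "snd i"] by (simp add: abs_mult power_mult_distrib)
  have S12: "integrable M (\<lambda>\<omega>. \<bar>\<Sum>i\<in>I. Y i \<omega>\<bar>^12)"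
    by (rule integrable_sum_pow[OF I]) (use Ymeas Y12 in auto)
  then show "integrable M (\<lambda>\<omega>. (\<Sum>i\<in>I. c i * xi (fst i) (snd i) \<omega>)^12)"
    unfolding Y_def by (simp add: power_even_abs)
  have "expectation (\<lambda>\<omega>. (\<Sum>i\<in>I. Y i \<omega>)^12) \<le> Cm 6 * (1 + (\<Sum>i\<in>I. (c i)^2 * mxi))^6"
  proof (rule moment_bound[OF I ind])
    show "Y i \<in> borel_measurable M" for i by (rule Ymeas)
    show "integrable M (\<lambda>\<omega>. \<bar>Y i \<omega>\<bar>^12)" for i by (rule Y12)
    show "expectation (Y i) = 0" for i unfolding Y_def using xi_mean_all by simp
    show "0 \<le> (c i)^2 * mxi" for i using mxi_pos by simp
    fix i and r :: nat assume i: "i \<in> I" and r: "2 \<le> r" "r \<le> 12"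
    have "expectation (\<lambda>\<omega>. \<bar>Y i \<omega>\<bar>^r) = \<bar>c i\<bar>^r * expectation (\<lambda>\<omega>. \<bar>xi (fst i) (snd i) \<omega>\<bar>^r)"
      unfolding Y_def by (simp add: abs_mult power_mult_distrib)
    also have "\<dots> \<le> (c i)^2 * mxi"
    proof (rule mult_mono)
      have "\<bar>c i\<bar>^r \<le> \<bar>c i\<bar>^2" using c1[OF i] r by (intro power_decreasing) auto
      then show "\<bar>c i\<bar>^r \<le> (c i)^2" by simp
      show "expectation (\<lambda>\<omega>. \<bar>xi (fst i) (snd i) \<omega>\<bar>^r) \<le> mxi" using xi_mom_all r by simp
    qed (auto intro: integral_nonneg_AE)
    finally show "expectation (\<lambda>\<omega>. \<bar>Y i \<omega>\<bar>^r) \<le> (c i)^2 * mxi" .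
  qed
  also have "\<dots> \<le> Cm 6 * (1 + mxi * V)^6"
  proof (intro mult_left_mono power_mono Cm_nn)
    show "1 + (\<Sum>i\<in>I. (c i)^2 * mxi) \<le> 1 + mxi * V"
    proof -
      have "(\<Sum>i\<in>I. (c i)^2 * mxi) = (\<Sum>i\<in>I. (c i)^2) * mxi" by (simp add: sum_distrib_right)
      also have "\<dots> \<le> V * mxi" using V mxi_pos by (intro mult_right_mono) auto
      finally show ?thesis by (simp add: mult.commute)
    qed
    show "0 \<le> 1 + (\<Sum>i\<in>I. (c i)^2 * mxi)" using mxi_pos by (auto intro!: add_nonneg_nonneg sum_nonneg)
  qed
  finally show "expectation (\<lambda>\<omega>. (\<Sum>i\<in>I. c i * xi (fst i) (snd i) \<omega>)^12) \<le> Cm 6 * (1 + mxi * V)^6"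
    unfolding Y_def .
qed

end

locale harness = xisetup M xi + walk p R for M :: "'a measure" and xi p R +
  fixes h :: "nat \<Rightarrow> int \<Rightarrow> 'a \<Rightarrow> real" and eta :: "int \<Rightarrow> 'a \<Rightarrow> real" and Ce Cg :: real
  assumes h_step': "\<And>t x \<omega>. \<omega> \<in> space M \<Longrightarrow>
        h (Suc t) x \<omega> = (\<Sum>a\<in>{-int R..int R}. p a * h t (x + a) \<omega>) + xi (int t + 1) x \<omega>"
    and eta_h: "\<And>x \<omega>. \<omega> \<in> space M \<Longrightarrow> eta x \<omega> = h 0 x \<omega> - h 0 (x - 1) \<omega>"
    and eta_meas': "\<And>x. eta x \<in> borel_measurable M"
    and eta_int12: "\<And>x. integrable M (\<lambda>\<omega>. eta x \<omega> ^ 12)"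
    and eta_mom12: "\<And>x. expectation (\<lambda>\<omega>. eta x \<omega> ^ 12) \<le> Ce"
    and grad: "\<And>k N. int k * int R + 1 \<le> N \<Longrightarrow> (\<Sum>i<k. \<Sum>z\<in>{-N..N}. (PP i z - PP i (z + 1))^2) \<le> Cg"
begin

definition Nk :: "nat \<Rightarrow> int" where "Nk k = int k * int R + 2"

definition FA :: "nat \<Rightarrow> int \<Rightarrow> 'a \<Rightarrow> real" where
  "FA k x \<omega> = (\<Sum>z\<in>{-Nk k..Nk k}. PP k z * eta (x + z) \<omega>)"

definition FB :: "nat \<Rightarrow> int \<Rightarrow> 'a \<Rightarrow> real" where
  "FB k x \<omega> = (\<Sum>j\<in>{1..k}. \<Sum>z\<in>{-Nk k..Nk k}. (PP (k - j) z - PP (k - j) (z + 1)) * xi (int j) (x + z) \<omega>)"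

definition F :: "nat \<Rightarrow> int \<Rightarrow> 'a \<Rightarrow> real" where
  "F k x \<omega> = FA k x \<omega> + FB k x \<omega>"

lemma F_eq: assumes "\<omega> \<in> space M" shows "h k x \<omega> - h k (x - 1) \<omega> = F k x \<omega>"
proof -
  have "h k x \<omega> - h k (x - 1) \<omega> = (\<Sum>z\<in>{-Nk k..Nk k}. PP k z * (h 0 (x + z) \<omega> - h 0 (x + z - 1) \<omega>))
           + (\<Sum>j\<in>{1..k}. \<Sum>z\<in>{-Nk k..Nk k}. (PP (k - j) z - PP (k - j) (z + 1)) * xi (int j) (x + z) \<omega>)"
    by (rule incr_formula[where h="\<lambda>t y. h t y \<omega>" and X="\<lambda>t y. xi t y \<omega>"])
       (use h_step'[OF assms] in \<open>auto simp: Nk_def\<close>)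
  then show ?thesis unfolding F_def FA_def FB_def using eta_h[OF assms] by simp
qed

lemma FA_meas: "FA k x \<in> borel_measurable M" unfolding FA_def using eta_meas' by simp
lemma FB_meas: "FB k x \<in> borel_measurable M" unfolding FB_def using xi_meas by simp
lemma F_meas: "F k x \<in> borel_measurable M" unfolding F_def using FA_meas FB_meas by simp

lemma FA_mom: "integrable M (\<lambda>\<omega>. FA k x \<omega> ^ 12)" "expectation (\<lambda>\<omega>. FA k x \<omega> ^ 12) \<le> Ce"
proof -
  define N where "N = Nk k"
  have N: "int k * int R \<le> N" by (simp add: N_def Nk_def)
  have ne: "{-N..N} \<noteq> {}" using N by (auto simp: N_def Nk_def)
  have e12: "integrable M (\<lambda>\<omega>. \<bar>eta y \<omega>\<bar>^12)" for y using eta_int12[of y] by (simp add: power_even_abs)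
  have i1: "integrable M (\<lambda>\<omega>. \<bar>FA k x \<omega>\<bar>^12)" unfolding FA_def
  proof (rule integrable_sum_pow)
    fix z
    show "integrable M (\<lambda>\<omega>. \<bar>PP k z * eta (x + z) \<omega>\<bar>^12)"
      using e12[of "x + z"] by (simp add: abs_mult power_mult_distrib)
  qed (use eta_meas' in auto)
  then show "integrable M (\<lambda>\<omega>. FA k x \<omega> ^ 12)" by (simp add: power_even_abs)
  have pt: "FA k x \<omega> ^ 12 \<le> (\<Sum>z\<in>{-N..N}. PP k z * eta (x + z) \<omega> ^ 12)" for \<omega>
    unfolding FA_def N_def[symmetric]
    using convex_on_sum[OF _ ne convex_power_even[of 12], of "PP k" "\<lambda>z. eta (x + z) \<omega>"]
      PP_sum[OF N] PP_nn by simp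
  have "expectation (\<lambda>\<omega>. FA k x \<omega> ^ 12) \<le> expectation (\<lambda>\<omega>. \<Sum>z\<in>{-N..N}. PP k z * eta (x + z) \<omega> ^ 12)"
    by (intro integral_mono pt) (use i1 eta_int12 in \<open>auto simp: power_even_abs\<close>)
  also have "\<dots> = (\<Sum>z\<in>{-N..N}. PP k z * expectation (\<lambda>\<omega>. eta (x + z) \<omega> ^ 12))"
    by (subst Bochner_Integration.integral_sum) (use eta_int12 in auto)
  also have "\<dots> \<le> (\<Sum>z\<in>{-N..N}. PP k z * Ce)"
    by (intro sum_mono mult_left_mono eta_mom12 PP_nn)
  also have "\<dots> = Ce" using PP_sum[OF N] by (simp add: sum_distrib_right[symmetric])
  finally show "expectation (\<lambda>\<omega>. FA k x \<omega> ^ 12) \<le> Ce" .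
qed

end

lemma sum_rev_nat: fixes k :: nat shows "(\<Sum>j\<in>{1..k}. f (k - j)) = (\<Sum>i<k. (f i :: real))"
  by (rule sum.reindex_bij_witness[of _ "\<lambda>i::nat. k - i" "\<lambda>j::nat. k - j"]) auto

context walk begin

lemma G_abs: "\<bar>PP i z - PP i w\<bar> \<le> 1"
  using PP_nn[of i z] PP_nn[of i w] PP_le1[of i z] PP_le1[of i w] by linarith

end

context xisetup begin

lemma xi_double_sum:
  fixes k :: nat and N x :: int and s :: "nat \<Rightarrow> int" and g :: "nat \<Rightarrow> int \<Rightarrow> real"
  assumes s: "inj_on s A" and A: "finite A"
    and g1: "\<And>j z. \<bar>g j z\<bar> \<le> 1" and V: "(\<Sum>j\<in>A. \<Sum>z\<in>{-N..N}. (g j z)^2) \<le> V"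
  shows "integrable M (\<lambda>\<omega>. (\<Sum>j\<in>A. \<Sum>z\<in>{-N..N}. g j z * xi (s j) (x + z) \<omega>)^12)"
    and "expectation (\<lambda>\<omega>. (\<Sum>j\<in>A. \<Sum>z\<in>{-N..N}. g j z * xi (s j) (x + z) \<omega>)^12) \<le> Cm 6 * (1 + mxi * V)^6"
proof -
  define \<phi> where "\<phi> = (\<lambda>(j, z). (s j, x + z))"
  define T where "T = \<phi> ` (A \<times> {-N..N})"
  define sinv where "sinv = the_inv_into A s"
  define c where "c i = g (sinv (fst i)) (snd i - x)" for i
  have inj: "inj_on \<phi> (A \<times> {-N..N})" using s unfolding \<phi>_def by (auto simp: inj_on_def)
  have cphi: "c (\<phi> (j, z)) = g j z" if "j \<in> A" for j z
    unfolding c_def \<phi>_def sinv_def using the_inv_into_f_f[OF s that] by simp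
  have eqS: "(\<Sum>j\<in>A. \<Sum>z\<in>{-N..N}. g j z * xi (s j) (x + z) \<omega>) = (\<Sum>i\<in>T. c i * xi (fst i) (snd i) \<omega>)" for \<omega>
  proof -
    have "(\<Sum>j\<in>A. \<Sum>z\<in>{-N..N}. g j z * xi (s j) (x + z) \<omega>)
        = (\<Sum>(j, z)\<in>A \<times> {-N..N}. g j z * xi (s j) (x + z) \<omega>)" by (rule sum.cartesian_product)
    also have "\<dots> = (\<Sum>a\<in>A \<times> {-N..N}. (\<lambda>i. c i * xi (fst i) (snd i) \<omega>) (\<phi> a))"
      by (intro sum.cong refl) (auto simp: cphi, simp add: \<phi>_def)
    also have "\<dots> = (\<Sum>i\<in>T. c i * xi (fst i) (snd i) \<omega>)" unfolding T_def
      using sum.reindex[OF inj, of "\<lambda>i. c i * xi (fst i) (snd i) \<omega>"] by simp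
    finally show ?thesis .
  qed
  have eqV: "(\<Sum>i\<in>T. (c i)^2) = (\<Sum>j\<in>A. \<Sum>z\<in>{-N..N}. (g j z)^2)"
  proof -
    have "(\<Sum>i\<in>T. (c i)^2) = (\<Sum>a\<in>A \<times> {-N..N}. (c (\<phi> a))^2)" unfolding T_def
      using sum.reindex[OF inj, of "\<lambda>i. (c i)^2"] by (simp add: comp_def)
    also have "\<dots> = (\<Sum>(j, z)\<in>A \<times> {-N..N}. (g j z)^2)" by (intro sum.cong refl) (auto simp: cphi)
    also have "\<dots> = (\<Sum>j\<in>A. \<Sum>z\<in>{-N..N}. (g j z)^2)" by (rule sum.cartesian_product[symmetric])
    finally show ?thesis .
  qed
  have finT: "finite T" unfolding T_def using A by simp
  have c1: "\<bar>c i\<bar> \<le> 1" for i unfolding c_def by (rule g1)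
  show "integrable M (\<lambda>\<omega>. (\<Sum>j\<in>A. \<Sum>z\<in>{-N..N}. g j z * xi (s j) (x + z) \<omega>)^12)"
    unfolding eqS by (rule xi_sum_bound(1)[OF finT c1]) (use eqV V in simp)
  show "expectation (\<lambda>\<omega>. (\<Sum>j\<in>A. \<Sum>z\<in>{-N..N}. g j z * xi (s j) (x + z) \<omega>)^12) \<le> Cm 6 * (1 + mxi * V)^6"
    unfolding eqS by (rule xi_sum_bound(2)[OF finT c1]) (use eqV V in simp)
qed

end

context harness begin

definition CB :: real where "CB = Cm 6 * (1 + mxi * Cg)^6"

lemma FB_mom: "integrable M (\<lambda>\<omega>. FB k x \<omega> ^ 12)" "expectation (\<lambda>\<omega>. FB k x \<omega> ^ 12) \<le> CB"
proof -
  have V: "(\<Sum>j\<in>{1..k}. \<Sum>z\<in>{-Nk k..Nk k}. (PP (k - j) z - PP (k - j) (z + 1))^2) \<le> Cg"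
    using sum_rev_nat[of "\<lambda>i. \<Sum>z\<in>{-Nk k..Nk k}. (PP i z - PP i (z + 1))^2" k] grad[of k "Nk k"]
    by (simp add: Nk_def)
  note r = xi_double_sum[where s=int and A="{1..k}" and g="\<lambda>j z. PP (k - j) z - PP (k - j) (z + 1)",
      OF _ _ G_abs V, of x]
  show "integrable M (\<lambda>\<omega>. FB k x \<omega> ^ 12)" unfolding FB_def using r(1) by simp
  show "expectation (\<lambda>\<omega>. FB k x \<omega> ^ 12) \<le> CB" unfolding FB_def CB_def using r(2) by simp
qed

definition CF :: real where "CF = 2^12 * (Ce + CB)"

lemma F_mom: "integrable M (\<lambda>\<omega>. F k x \<omega> ^ 12)" "expectation (\<lambda>\<omega>. F k x \<omega> ^ 12) \<le> CF"
proof -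
  have pt: "F k x \<omega> ^ 12 \<le> 2^12 * (FA k x \<omega> ^ 12 + FB k x \<omega> ^ 12)" for \<omega>
    using abs_add_pow[of "FA k x \<omega>" "FB k x \<omega>" 12] unfolding F_def by (simp add: power_even_abs)
  have ib: "integrable M (\<lambda>\<omega>. 2^12 * (FA k x \<omega> ^ 12 + FB k x \<omega> ^ 12))"
    using FA_mom(1) FB_mom(1) by simp
  show i: "integrable M (\<lambda>\<omega>. F k x \<omega> ^ 12)"
    by (rule Bochner_Integration.integrable_bound[OF ib]) (use F_meas pt in \<open>auto simp: zero_le_even_power\<close>)
  have "expectation (\<lambda>\<omega>. F k x \<omega> ^ 12) \<le> expectation (\<lambda>\<omega>. 2^12 * (FA k x \<omega> ^ 12 + FB k x \<omega> ^ 12))"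
    by (intro integral_mono i ib pt)
  also have "\<dots> = 2^12 * (expectation (\<lambda>\<omega>. FA k x \<omega> ^ 12) + expectation (\<lambda>\<omega>. FB k x \<omega> ^ 12))"
    using FA_mom(1) FB_mom(1) by simp
  also have "\<dots> \<le> CF" unfolding CF_def using FA_mom(2)[of k x] FB_mom(2)[of k x] by simp
  finally show "expectation (\<lambda>\<omega>. F k x \<omega> ^ 12) \<le> CF" .
qed

end

context harness begin

lemma tele:
  assumes \<omega>: "\<omega> \<in> space M" and HE: "\<And>z. x < z \<Longrightarrow> z \<le> x + int d \<Longrightarrow> \<bar>F k z \<omega>\<bar> \<le> E"
  shows "\<bar>h k (x + int d) \<omega> - h k x \<omega>\<bar> \<le> real d * E"
  using HE
proof (induction d)
  case 0 then show ?case by simp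
next
  case (Suc d)
  have IH: "\<bar>h k (x + int d) \<omega> - h k x \<omega>\<bar> \<le> real d * E" by (rule Suc.IH) (use Suc.prems in auto)
  have "h k (x + int (Suc d)) \<omega> - h k (x + int d) \<omega> = F k (x + int (Suc d)) \<omega>"
    using F_eq[OF \<omega>, of k "x + int (Suc d)"] by simp
  moreover have "\<bar>F k (x + int (Suc d)) \<omega>\<bar> \<le> E" by (rule Suc.prems) auto
  ultimately show ?case using IH by (simp add: algebra_simps)
qed

lemma space_diff:
  assumes \<omega>: "\<omega> \<in> space M" and HE: "\<And>z. \<bar>z\<bar> \<le> Lz \<Longrightarrow> \<bar>F k z \<omega>\<bar> \<le> E"
    and x: "\<bar>x\<bar> \<le> Lz" and y: "\<bar>y\<bar> \<le> Lz"
  shows "\<bar>h k y \<omega> - h k x \<omega>\<bar> \<le> real_of_int \<bar>y - x\<bar> * E"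
proof -
  have gen: "\<bar>h k v \<omega> - h k u \<omega>\<bar> \<le> real_of_int \<bar>v - u\<bar> * E" if "u \<le> v" "\<bar>u\<bar> \<le> Lz" "\<bar>v\<bar> \<le> Lz" for u v
  proof -
    have "\<bar>h k (u + int (nat (v - u))) \<omega> - h k u \<omega>\<bar> \<le> real (nat (v - u)) * E"
      by (rule tele[OF \<omega>]) (use that in \<open>intro HE, auto\<close>)
    then show ?thesis using that by simp
  qed
  show ?thesis
  proof (cases "x \<le> y")
    case True then show ?thesis using gen x y by auto
  next
    case False
    then have "\<bar>h k x \<omega> - h k y \<omega>\<bar> \<le> real_of_int \<bar>x - y\<bar> * E" using gen x y by auto
    then show ?thesis by (simp add: abs_minus_commute)
  qed
qed

lemma time_diff:
  assumes \<omega>: "\<omega> \<in> space M" and E: "0 \<le> E"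
    and HE: "\<And>z. \<bar>z\<bar> \<le> L + int R \<Longrightarrow> \<bar>F k z \<omega>\<bar> \<le> E"
    and HX: "\<bar>xi (int k + 1) x \<omega>\<bar> \<le> Xi" and x: "\<bar>x\<bar> \<le> L"
  shows "\<bar>h (Suc k) x \<omega> - h k x \<omega>\<bar> \<le> real R * E + Xi"
proof -
  have "h (Suc k) x \<omega> - h k x \<omega> = (\<Sum>a\<in>{-int R..int R}. p a * (h k (x + a) \<omega> - h k x \<omega>)) + xi (int k + 1) x \<omega>"
    using h_step'[OF \<omega>, of k x] p_one
    by (simp add: right_diff_distrib sum_subtractf sum_distrib_right[symmetric])
  also have "\<bar>\<dots>\<bar> \<le> (\<Sum>a\<in>{-int R..int R}. p a * (real R * E)) + Xi"
  proof -
    have "\<bar>\<Sum>a\<in>{-int R..int R}. p a * (h k (x + a) \<omega> - h k x \<omega>)\<bar> \<le> (\<Sum>a\<in>{-int R..int R}. \<bar>p a * (h k (x + a) \<omega> - h k x \<omega>)\<bar>)"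
      by (rule sum_abs)
    also have "\<dots> \<le> (\<Sum>a\<in>{-int R..int R}. p a * (real R * E))"
    proof (rule sum_mono)
      fix a assume a: "a \<in> {-int R..int R}"
      have "\<bar>h k (x + a) \<omega> - h k x \<omega>\<bar> \<le> \<bar>x + a - x\<bar> * E"
        by (rule space_diff[OF \<omega>, where Lz="L + int R"]) (use a x HE in auto)
      also have "\<dots> \<le> real R * E" using a E by (intro mult_right_mono) auto
      finally show "\<bar>p a * (h k (x + a) \<omega> - h k x \<omega>)\<bar> \<le> p a * (real R * E)"
        using p_nn[of a] by (simp add: abs_mult mult_left_mono)
    qed
    finally show ?thesis using HX by linarith
  qed
  also have "\<dots> = real R * E + Xi" using p_one by (simp add: sum_distrib_right[symmetric])
  finally show ?thesis .
qed

lemma h_diff_bound: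
  assumes \<omega>: "\<omega> \<in> space M" and E: "0 \<le> E" and Xi: "0 \<le> Xi"
    and HE: "\<And>k z. k \<le> n \<Longrightarrow> \<bar>z\<bar> \<le> L + int R \<Longrightarrow> \<bar>F k z \<omega>\<bar> \<le> E"
    and HX: "\<And>t y. 1 \<le> t \<Longrightarrow> t \<le> n \<Longrightarrow> \<bar>y\<bar> \<le> L \<Longrightarrow> \<bar>xi (int t) y \<omega>\<bar> \<le> Xi"
    and k: "k1 \<le> n" "k2 \<le> n" "\<bar>int k1 - int k2\<bar> \<le> 1"
    and x: "\<bar>x1\<bar> \<le> L" "\<bar>x2\<bar> \<le> L" "\<bar>x1 - x2\<bar> \<le> 2"
  shows "\<bar>h k1 x1 \<omega> - h k2 x2 \<omega>\<bar> \<le> (real R + 2) * E + Xi"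
proof -
  have sd: "\<bar>h k x1 \<omega> - h k x2 \<omega>\<bar> \<le> 2 * E" if "k \<le> n" for k
  proof -
    have "\<bar>h k x1 \<omega> - h k x2 \<omega>\<bar> \<le> \<bar>x1 - x2\<bar> * E"
      by (rule space_diff[OF \<omega>, where Lz="L + int R"]) (use that HE x in auto)
    also have "\<dots> \<le> 2 * E" using x E by (intro mult_right_mono) auto
    finally show ?thesis .
  qed
  have td: "\<bar>h (Suc k) x \<omega> - h k x \<omega>\<bar> \<le> real R * E + Xi" if "Suc k \<le> n" "\<bar>x\<bar> \<le> L" for k x
    by (rule time_diff[OF \<omega> E, where L=L]) (use that HE HX[of "Suc k" x] in \<open>auto simp: add.commute\<close>)
  have RE: "0 \<le> real R * E" using E by simp
  consider "k1 = k2" | "k1 = Suc k2" | "k2 = Suc k1" using k by linarith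
  then show ?thesis
  proof cases
    case 1
    have "(real R + 2) * E = real R * E + 2 * E" by (simp add: algebra_simps)
    moreover have "\<bar>h k2 x1 \<omega> - h k2 x2 \<omega>\<bar> \<le> 2 * E" using sd k by simp
    ultimately show ?thesis using RE Xi unfolding 1 by linarith
  next
    case 2
    have "\<bar>h k1 x1 \<omega> - h k2 x2 \<omega>\<bar> \<le> \<bar>h (Suc k2) x1 \<omega> - h k2 x1 \<omega>\<bar> + \<bar>h k2 x1 \<omega> - h k2 x2 \<omega>\<bar>"
      unfolding 2 by linarith
    also have "\<dots> \<le> (real R * E + Xi) + 2 * E" using td[of k2 x1] sd[of k2] 2 k x by simp
    finally show ?thesis by (simp add: algebra_simps)
  next
    case 3
    have "\<bar>h k1 x1 \<omega> - h k2 x2 \<omega>\<bar> \<le> \<bar>h (Suc k1) x2 \<omega> - h k1 x2 \<omega>\<bar> + \<bar>h k1 x1 \<omega> - h k1 x2 \<omega>\<bar>"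
      unfolding 3 by linarith
    also have "\<dots> \<le> (real R * E + Xi) + 2 * E" using td[of k1 x2] sd[of k1] 3 k x by simp
    finally show ?thesis by (simp add: algebra_simps)
  qed
qed

end

context prob_space begin

lemma markov12:
  fixes f :: "'a \<Rightarrow> real"
  assumes f: "f \<in> borel_measurable M" and i: "integrable M (\<lambda>\<omega>. f \<omega> ^ 12)"
    and C: "expectation (\<lambda>\<omega>. f \<omega> ^ 12) \<le> C" and \<theta>: "0 < \<theta>"
  shows "prob {\<omega>\<in>space M. \<theta> < \<bar>f \<omega>\<bar>} \<le> C / \<theta>^12"
proof -
  have "{\<omega>\<in>space M. \<theta> < \<bar>f \<omega>\<bar>} \<subseteq> {\<omega>\<in>space M. \<theta>^12 \<le> f \<omega> ^ 12}"
  proof safe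
    fix \<omega> assume "\<theta> < \<bar>f \<omega>\<bar>"
    then have "\<theta>^12 \<le> \<bar>f \<omega>\<bar>^12" using \<theta> by (intro power_mono) auto
    then show "\<theta>^12 \<le> f \<omega> ^ 12" by (simp add: power_even_abs)
  qed
  then have "prob {\<omega>\<in>space M. \<theta> < \<bar>f \<omega>\<bar>} \<le> prob {\<omega>\<in>space M. \<theta>^12 \<le> f \<omega> ^ 12}"
    by (intro finite_measure_mono) (use f in measurable)
  also have "\<dots> \<le> expectation (\<lambda>\<omega>. f \<omega> ^ 12) / \<theta>^12"
    by (rule integral_Markov_inequality_measure[OF i, where A="space M"]) (use \<theta> in \<open>auto simp: zero_le_even_power\<close>)
  also have "\<dots> \<le> C / \<theta>^12" using C \<theta> by (intro divide_right_mono) auto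
  finally show ?thesis .
qed

lemma measure_le_sets:
  assumes "A \<subseteq> B" "B \<in> sets M" shows "prob A \<le> prob B"
proof (cases "A \<in> sets M")
  case True then show ?thesis using assms by (intro finite_measure_mono) auto
next
  case False then show ?thesis by (simp add: measure_notin_sets)
qed

end

context harness begin

definition BadF :: "nat \<Rightarrow> int \<Rightarrow> real \<Rightarrow> 'a set" where
  "BadF n L \<theta> = (\<Union>i\<in>{..n} \<times> {-(L + int R)..L + int R}. {\<omega>\<in>space M. \<theta> < \<bar>F (fst i) (snd i) \<omega>\<bar>})"

definition BadX :: "nat \<Rightarrow> int \<Rightarrow> real \<Rightarrow> 'a set" where
  "BadX n L \<theta> = (\<Union>i\<in>{1..n} \<times> {-L..L}. {\<omega>\<in>space M. \<theta> < \<bar>xi (int (fst i)) (snd i) \<omega>\<bar>})"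

lemma BadF_sets: "BadF n L \<theta> \<in> sets M"
  unfolding BadF_def using F_meas by (intro sets.finite_UN) auto

lemma BadX_sets: "BadX n L \<theta> \<in> sets M"
  unfolding BadX_def using xi_meas by (intro sets.finite_UN) auto

lemma BadF_prob: assumes "0 < \<theta>"
  shows "prob (BadF n L \<theta>) \<le> real (card ({..n} \<times> {-(L + int R)..L + int R})) * (CF / \<theta>^12)"
proof -
  have "prob (BadF n L \<theta>) \<le> (\<Sum>i\<in>{..n} \<times> {-(L + int R)..L + int R}. prob {\<omega>\<in>space M. \<theta> < \<bar>F (fst i) (snd i) \<omega>\<bar>})"
    unfolding BadF_def by (intro finite_measure_subadditive_finite) (use F_meas in auto)
  also have "\<dots> \<le> (\<Sum>i\<in>{..n} \<times> {-(L + int R)..L + int R}. CF / \<theta>^12)"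
    by (intro sum_mono markov12 F_meas F_mom assms)
  finally show ?thesis by simp
qed

lemma BadX_prob: assumes "0 < \<theta>"
  shows "prob (BadX n L \<theta>) \<le> real (card ({1..n} \<times> {-L..L})) * (mxi / \<theta>^12)"
proof -
  have "prob (BadX n L \<theta>) \<le> (\<Sum>i\<in>{1..n} \<times> {-L..L}. prob {\<omega>\<in>space M. \<theta> < \<bar>xi (int (fst i)) (snd i) \<omega>\<bar>})"
    unfolding BadX_def by (intro finite_measure_subadditive_finite) (use xi_meas in auto)
  also have "\<dots> \<le> (\<Sum>i\<in>{1..n} \<times> {-L..L}. mxi / \<theta>^12)"
  proof (intro sum_mono markov12 xi_meas assms)
    fix i :: "nat \<times> int"
    have "integrable M (\<lambda>\<omega>. \<bar>xi (int (fst i)) (snd i) \<omega>\<bar>^12)" by (rule xi12)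
    then show "integrable M (\<lambda>\<omega>. xi (int (fst i)) (snd i) \<omega> ^ 12)" by (simp add: power_even_abs)
    show "expectation (\<lambda>\<omega>. xi (int (fst i)) (snd i) \<omega> ^ 12) \<le> mxi"
      using xi_mom_all(2)[of 12 "int (fst i)" "snd i"] by (simp add: power_even_abs)
  qed
  finally show ?thesis by simp
qed

end

lemma floor_close: fixes a a' :: real assumes "\<bar>a - a'\<bar> \<le> 1" shows "\<bar>\<lfloor>a\<rfloor> - \<lfloor>a'\<rfloor>\<bar> \<le> 1"
proof -
  have "of_int \<lfloor>a\<rfloor> \<le> a" "a < of_int \<lfloor>a\<rfloor> + 1" "of_int \<lfloor>a'\<rfloor> \<le> a'" "a' < of_int \<lfloor>a'\<rfloor> + 1"
    by linarith+
  then have "real_of_int (\<lfloor>a\<rfloor> - \<lfloor>a'\<rfloor>) < 2" "real_of_int (\<lfloor>a'\<rfloor> - \<lfloor>a\<rfloor>) < 2" using assms by (simp_all add: abs_le_iff; linarith)+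
  then have "\<lfloor>a\<rfloor> - \<lfloor>a'\<rfloor> < 2" "\<lfloor>a'\<rfloor> - \<lfloor>a\<rfloor> < 2" by linarith+
  then show ?thesis by linarith
qed

lemma floor_abs_le: fixes a :: real shows "real_of_int \<bar>\<lfloor>a\<rfloor>\<bar> \<le> \<bar>a\<bar> + 1"
proof -
  have "of_int \<lfloor>a\<rfloor> \<le> a" "a < of_int \<lfloor>a\<rfloor> + 1" by linarith+
  then show ?thesis by linarith
qed

context harness begin

lemma pair_bound:
  fixes mu0 b \<gamma> \<theta> t r s q :: real and n :: nat and L :: int
  assumes n2: "2 \<le> n" and \<gamma>: "1 < \<gamma>" and bn: "real n powr (1 - \<gamma>) * \<bar>b\<bar> \<le> 1"
    and \<omega>: "\<omega> \<in> space M" and \<theta>: "0 \<le> \<theta>"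
    and HE: "\<And>k z. k \<le> n \<Longrightarrow> \<bar>z\<bar> \<le> L + int R \<Longrightarrow> \<bar>F k z \<omega>\<bar> \<le> \<theta>"
    and HX: "\<And>t y. 1 \<le> t \<Longrightarrow> t \<le> n \<Longrightarrow> \<bar>y\<bar> \<le> L \<Longrightarrow> \<bar>xi (int t) y \<omega>\<bar> \<le> \<theta>"
    and L: "L = int n * (1 + \<lceil>\<bar>b\<bar>\<rceil>) + 2"
    and tr: "t \<in> {0..1}" "r \<in> {0..1}" "s \<in> {0..1}" "q \<in> {0..1}"
    and d: "dist (t, r) (s, q) < real n powr (- \<gamma>)"
  shows "\<bar>Zproc h mu0 b n t r \<omega> - Zproc h mu0 b n s q \<omega>\<bar>
      \<le> real n powr (-1/4) * ((real R + 3) * \<theta>) + \<bar>mu0\<bar> * real n powr (1/4 - \<gamma>)"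
proof -
  define \<delta> where "\<delta> = real n powr (- \<gamma>)"
  have npos: "0 < real n" using n2 by simp
  have n1: "1 < real n" using n2 by simp
  have dts: "\<bar>t - s\<bar> < \<delta>" and drq: "\<bar>r - q\<bar> < \<delta>"
    using d unfolding \<delta>_def dist_Pair_Pair dist_real_def
    by (metis order.strict_trans1 real_sqrt_sum_squares_ge1 real_sqrt_sum_squares_ge2 power2_abs)+
  have nd: "real n * \<delta> = real n powr (1 - \<gamma>)"
    unfolding \<delta>_def using npos by (simp add: powr_mult_base)
  have nd1: "real n * \<delta> < 1" unfolding nd using n1 \<gamma> by (intro powr_less_one) auto
  have sd: "sqrt (real n) * \<delta> = real n powr (1/2 - \<gamma>)"
    unfolding \<delta>_def using npos by (simp add: powr_half_sqrt[symmetric] powr_add[symmetric])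
  have sd1: "sqrt (real n) * \<delta> < 1" unfolding sd using n1 \<gamma> by (intro powr_less_one) auto
  define k1 where "k1 = nat \<lfloor>real n * t\<rfloor>"
  define k2 where "k2 = nat \<lfloor>real n * s\<rfloor>"
  define x1 where "x1 = \<lfloor>r * sqrt (real n)\<rfloor> + \<lfloor>real n * t * b\<rfloor>"
  define x2 where "x2 = \<lfloor>q * sqrt (real n)\<rfloor> + \<lfloor>real n * s * b\<rfloor>"
  have ntpos: "0 \<le> real n * t" "0 \<le> real n * s" using tr by auto
  have k1i: "int k1 = \<lfloor>real n * t\<rfloor>" "int k2 = \<lfloor>real n * s\<rfloor>" unfolding k1_def k2_def using ntpos by auto
  have kn: "k1 \<le> n" "k2 \<le> n"
  proof -
    have "real n * t \<le> real n" "real n * s \<le> real n" using tr npos by auto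
    then have "\<lfloor>real n * t\<rfloor> \<le> int n" "\<lfloor>real n * s\<rfloor> \<le> int n" by linarith+
    then show "k1 \<le> n" "k2 \<le> n" using k1i by linarith+
  qed
  have kd: "\<bar>int k1 - int k2\<bar> \<le> 1" unfolding k1i
  proof (rule floor_close)
    have "real n * t - real n * s = real n * (t - s)" by (simp add: algebra_simps)
    then have "\<bar>real n * t - real n * s\<bar> = real n * \<bar>t - s\<bar>" using npos by (simp add: abs_mult)
    also have "\<dots> \<le> real n * \<delta>" using dts npos by simp
    finally show "\<bar>real n * t - real n * s\<bar> \<le> 1" using nd1 by simp
  qed
  have xd: "\<bar>x1 - x2\<bar> \<le> 2"
  proof -
    have a: "\<bar>\<lfloor>r * sqrt (real n)\<rfloor> - \<lfloor>q * sqrt (real n)\<rfloor>\<bar> \<le> 1"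
    proof (rule floor_close)
      have "r * sqrt (real n) - q * sqrt (real n) = sqrt (real n) * (r - q)" by (simp add: algebra_simps)
      then have "\<bar>r * sqrt (real n) - q * sqrt (real n)\<bar> = sqrt (real n) * \<bar>r - q\<bar>"
        by (simp add: abs_mult)
      also have "\<dots> \<le> sqrt (real n) * \<delta>" using drq by (intro mult_left_mono) auto
      finally show "\<bar>r * sqrt (real n) - q * sqrt (real n)\<bar> \<le> 1" using sd1 by simp
    qed
    have b': "\<bar>\<lfloor>real n * t * b\<rfloor> - \<lfloor>real n * s * b\<rfloor>\<bar> \<le> 1"
    proof (rule floor_close)
      have "real n * t * b - real n * s * b = (real n * (t - s)) * b" by (simp add: algebra_simps)
      then have "\<bar>real n * t * b - real n * s * b\<bar> = (real n * \<bar>t - s\<bar>) * \<bar>b\<bar>"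
        using npos by (simp add: abs_mult)
      also have "\<dots> \<le> (real n * \<delta>) * \<bar>b\<bar>" using dts npos by (intro mult_right_mono) auto
      finally show "\<bar>real n * t * b - real n * s * b\<bar> \<le> 1" using bn nd by simp
    qed
    show ?thesis unfolding x1_def x2_def using a b' by linarith
  qed
  have xL: "\<bar>x\<bar> \<le> L" if x: "x = \<lfloor>r' * sqrt (real n)\<rfloor> + \<lfloor>real n * t' * b\<rfloor>" and rt: "r' \<in> {0..1}" "t' \<in> {0..1}" for x r' t'
  proof -
    have s1: "sqrt (real n) \<le> real n"
    proof -
      have "1 \<le> sqrt (real n)" using n1 by simp
      then have "sqrt (real n) * 1 \<le> sqrt (real n) * sqrt (real n)" by (intro mult_left_mono) auto
      then show ?thesis using npos by simp
    qed
    have "\<bar>r' * sqrt (real n)\<bar> = r' * sqrt (real n)" using rt by (simp add: abs_mult)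
    also have "\<dots> \<le> 1 * sqrt (real n)" using rt by (intro mult_right_mono) auto
    finally have "\<bar>r' * sqrt (real n)\<bar> \<le> real n" using s1 by simp
    moreover have "\<bar>real n * t' * b\<bar> \<le> real n * \<lceil>\<bar>b\<bar>\<rceil>"
    proof -
      have "\<bar>real n * t' * b\<bar> = real n * t' * \<bar>b\<bar>" using rt npos by (simp add: abs_mult)
      also have "\<dots> \<le> real n * \<bar>b\<bar>" using rt npos by (intro mult_right_mono) (auto intro: mult_left_le_one_le)
      also have "\<dots> \<le> real n * \<lceil>\<bar>b\<bar>\<rceil>" using npos by (intro mult_left_mono) auto
      finally show ?thesis .
    qed
    ultimately have "real_of_int \<bar>x\<bar> \<le> real n + real n * \<lceil>\<bar>b\<bar>\<rceil> + 2"
      using floor_abs_le[of "r' * sqrt (real n)"] floor_abs_le[of "real n * t' * b"] unfolding x by linarith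
    also have "\<dots> = real_of_int L" unfolding L by (simp add: algebra_simps)
    finally show ?thesis by linarith
  qed
  have x1L: "\<bar>x1\<bar> \<le> L" by (rule xL[OF x1_def]) (use tr in auto)
  have x2L: "\<bar>x2\<bar> \<le> L" by (rule xL[OF x2_def]) (use tr in auto)
  have hd: "\<bar>h k1 x1 \<omega> - h k2 x2 \<omega>\<bar> \<le> (real R + 2) * \<theta> + \<theta>"
    by (rule h_diff_bound[OF \<omega> \<theta> \<theta> HE HX kn kd x1L x2L xd]) auto
  have Zd: "Zproc h mu0 b n t r \<omega> - Zproc h mu0 b n s q \<omega>
      = real n powr (-1/4) * ((h k1 x1 \<omega> - h k2 x2 \<omega>) - mu0 * (r - q) * sqrt (real n))"
    unfolding Zproc_def k1_def k2_def x1_def x2_def by (simp add: algebra_simps)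
  have "\<bar>(h k1 x1 \<omega> - h k2 x2 \<omega>) - mu0 * (r - q) * sqrt (real n)\<bar>
      \<le> (real R + 3) * \<theta> + \<bar>mu0\<bar> * (sqrt (real n) * \<delta>)"
  proof -
    have "\<bar>mu0 * (r - q) * sqrt (real n)\<bar> = \<bar>mu0\<bar> * (sqrt (real n) * \<bar>r - q\<bar>)" by (simp add: abs_mult)
    also have "\<dots> \<le> \<bar>mu0\<bar> * (sqrt (real n) * \<delta>)" using drq by (intro mult_left_mono) auto
    finally show ?thesis using hd by (simp add: algebra_simps)
  qed
  then have "\<bar>Zproc h mu0 b n t r \<omega> - Zproc h mu0 b n s q \<omega>\<bar>
      \<le> real n powr (-1/4) * ((real R + 3) * \<theta> + \<bar>mu0\<bar> * (sqrt (real n) * \<delta>))"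
    unfolding Zd by (simp add: abs_mult mult_left_mono)
  also have "\<dots> = real n powr (-1/4) * ((real R + 3) * \<theta>) + \<bar>mu0\<bar> * real n powr (1/4 - \<gamma>)"
  proof -
    have "real n powr (-1/4) * real n powr (1/2 - \<gamma>) = real n powr (1/4 - \<gamma>)"
      by (simp add: powr_add[symmetric])
    then show ?thesis unfolding sd by (simp add: algebra_simps)
  qed
  finally show ?thesis .
qed

end

lemma card_bound:
  fixes n :: nat and Bb :: int and X Y :: real
  assumes n: "1 \<le> n" and Bb: "1 \<le> Bb" and X: "0 \<le> X" and Y: "0 \<le> Y"
  shows "real (card ({..n} \<times> {-(int n * Bb + 2 + int R)..int n * Bb + 2 + int R})) * X
       + real (card ({1..n} \<times> {-(int n * Bb + 2)..int n * Bb + 2})) * Y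
     \<le> (real n)^2 * (2 * (2 * of_int Bb + 5 + 2 * real R) * X + (2 * of_int Bb + 5) * Y)"
proof -
  have c1: "real (card ({..n} \<times> {-(int n * Bb + 2 + int R)..int n * Bb + 2 + int R}))
      = (real n + 1) * (2 * (real n * of_int Bb) + 5 + 2 * real R)"
  proof -
    have "0 \<le> int n * Bb" using Bb by simp
    have "card ({..n} \<times> {-(int n * Bb + 2 + int R)..int n * Bb + 2 + int R})
        = Suc n * nat ((int n * Bb + 2 + int R) - (-(int n * Bb + 2 + int R)) + 1)"
      by (simp only: card_cartesian_product card_atMost card_atLeastAtMost_int)
    also have "nat ((int n * Bb + 2 + int R) - (-(int n * Bb + 2 + int R)) + 1) = nat (2 * (int n * Bb) + 5 + 2 * int R)"
      by (simp add: algebra_simps)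
    finally have "real (card ({..n} \<times> {-(int n * Bb + 2 + int R)..int n * Bb + 2 + int R}))
        = real (Suc n * nat (2 * (int n * Bb) + 5 + 2 * int R))" by (simp only:)
    also have "\<dots> = real (Suc n) * real (nat (2 * (int n * Bb) + 5 + 2 * int R))" by (simp only: of_nat_mult)
    also have "real (nat (2 * (int n * Bb) + 5 + 2 * int R)) = of_int (2 * (int n * Bb) + 5 + 2 * int R)"
      using \<open>0 \<le> int n * Bb\<close> by (intro of_nat_nat) simp
    finally show ?thesis by simp
  qed
  have c2: "real (card ({1..n} \<times> {-(int n * Bb + 2)..int n * Bb + 2})) = real n * (2 * (real n * of_int Bb) + 5)"
  proof -
    have "0 \<le> int n * Bb" using Bb by simp
    have "card ({1..n} \<times> {-(int n * Bb + 2)..int n * Bb + 2})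
        = n * nat ((int n * Bb + 2) - (-(int n * Bb + 2)) + 1)"
      by (simp only: card_cartesian_product card_atLeastAtMost_int card_atLeastAtMost) simp
    also have "nat ((int n * Bb + 2) - (-(int n * Bb + 2)) + 1) = nat (2 * (int n * Bb) + 5)"
      by (simp add: algebra_simps)
    finally have "real (card ({1..n} \<times> {-(int n * Bb + 2)..int n * Bb + 2}))
        = real (n * nat (2 * (int n * Bb) + 5))" by (simp only:)
    also have "\<dots> = real n * real (nat (2 * (int n * Bb) + 5))" by (simp only: of_nat_mult)
    also have "real (nat (2 * (int n * Bb) + 5)) = of_int (2 * (int n * Bb) + 5)"
      using \<open>0 \<le> int n * Bb\<close> by (intro of_nat_nat) simp
    finally show ?thesis by simp
  qed
  have rn: "1 \<le> real n" using n by simp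
  have B1: "1 \<le> real_of_int Bb" using Bb by simp
  have "(real n + 1) * (2 * (real n * of_int Bb) + 5 + 2 * real R) \<le> (2 * real n) * (real n * (2 * of_int Bb + 5 + 2 * real R))"
  proof (intro mult_mono)
    show "2 * (real n * of_int Bb) + 5 + 2 * real R \<le> real n * (2 * of_int Bb + 5 + 2 * real R)"
    proof -
      have "2 * real R * 1 \<le> 2 * real R * real n" using rn by (intro mult_left_mono) auto
      then show ?thesis using rn by (simp add: algebra_simps)
    qed
  qed (use rn B1 in auto)
  then have a: "(real n + 1) * (2 * (real n * of_int Bb) + 5 + 2 * real R) \<le> (real n)^2 * (2 * (2 * of_int Bb + 5 + 2 * real R))"
    by (simp add: power2_eq_square algebra_simps)
  have "real n * (2 * (real n * of_int Bb) + 5) \<le> real n * (real n * (2 * of_int Bb + 5))"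
    using rn B1 by (intro mult_left_mono) (auto simp: algebra_simps)
  then have b: "real n * (2 * (real n * of_int Bb) + 5) \<le> (real n)^2 * (2 * of_int Bb + 5)"
    by (simp add: power2_eq_square algebra_simps)
  have "real (card ({..n} \<times> {-(int n * Bb + 2 + int R)..int n * Bb + 2 + int R})) * X
       + real (card ({1..n} \<times> {-(int n * Bb + 2)..int n * Bb + 2})) * Y
      \<le> (real n)^2 * (2 * (2 * of_int Bb + 5 + 2 * real R)) * X + (real n)^2 * (2 * of_int Bb + 5) * Y"
    unfolding c1 c2 using a b X Y by (intro add_mono mult_right_mono) auto
  then show ?thesis by (simp add: algebra_simps)
qed


context harness begin

lemma Ce_nn: "0 \<le> Ce"
proof -
  have "0 \<le> expectation (\<lambda>\<omega>. eta 0 \<omega> ^ 12)" by (intro integral_nonneg_AE) (auto simp: zero_le_even_power)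
  then show ?thesis using eta_mom12[of 0] by linarith
qed

lemma CF_nn: "0 \<le> CF"
  unfolding CF_def CB_def using Ce_nn Cm_nn[of 6]
  by (intro mult_nonneg_nonneg add_nonneg_nonneg) (auto simp: zero_le_even_power)

lemma main_limit:
  fixes mu0 b \<gamma> \<epsilon> :: real
  assumes \<gamma>: "1 < \<gamma>" and \<epsilon>: "0 < \<epsilon>"
  shows "(\<lambda>n. measure M {\<omega> \<in> space M.
            (SUP ((t, r), (s, q)) \<in> {((t, r), (s, q)). (t, r) \<in> {0..1} \<times> {0..1} \<and> (s, q) \<in> {0..1} \<times> {0..1}
                                      \<and> dist (t, r) (s, q) < real n powr (- \<gamma>)}.
               \<bar>Zproc h mu0 b n t r \<omega> - Zproc h mu0 b n s q \<omega>\<bar>) > \<epsilon>})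
         \<longlonglongrightarrow> 0"
proof -
  define S :: "nat \<Rightarrow> ((real \<times> real) \<times> real \<times> real) set" where "S n = {((t, r), (s, q)). (t, r) \<in> {0..1} \<times> {0..1} \<and> (s, q) \<in> {0..1} \<times> {0..1}
                                      \<and> dist (t, r) (s, q) < real n powr (- \<gamma>)}" for n :: nat
  define A where "A n = {\<omega> \<in> space M.
            (SUP ((t, r), (s, q)) \<in> S n. \<bar>Zproc h mu0 b n t r \<omega> - Zproc h mu0 b n s q \<omega>\<bar>) > \<epsilon>}" for n
  define c where "c = \<epsilon> / (2 * (real R + 3))"
  have c: "0 < c" using \<epsilon> by (simp add: c_def)
  define Bb where "Bb = 1 + \<lceil>\<bar>b\<bar>\<rceil>"
  have Bb: "1 \<le> Bb" by (simp add: Bb_def)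
  define L where "L n = int n * Bb + 2" for n :: nat
  define \<theta> where "\<theta> n = c * real n powr (1/4)" for n :: nat
  define K where "K = (2 * (2 * of_int Bb + 5 + 2 * real R) * CF + (2 * of_int Bb + 5) * mxi) / c^12"
  have ev: "eventually (\<lambda>n. 2 \<le> n \<and> real n powr (1 - \<gamma>) * \<bar>b\<bar> < 1 \<and> \<bar>mu0\<bar> * real n powr (1/4 - \<gamma>) < \<epsilon>/2) sequentially"
  proof -
    have t1: "(\<lambda>n. real n powr (1 - \<gamma>)) \<longlonglongrightarrow> 0"
      by (rule tendsto_neg_powr) (use \<gamma> filterlim_real_sequentially in auto)
    have t2: "(\<lambda>n. real n powr (1/4 - \<gamma>)) \<longlonglongrightarrow> 0"
      by (rule tendsto_neg_powr) (use \<gamma> filterlim_real_sequentially in auto)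
    have "(\<lambda>n. real n powr (1 - \<gamma>) * \<bar>b\<bar>) \<longlonglongrightarrow> 0" by (rule tendsto_mult_left_zero[OF t1])
    then have e1: "eventually (\<lambda>n. real n powr (1 - \<gamma>) * \<bar>b\<bar> < 1) sequentially"
      by (rule order_tendstoD(2)) simp
    have "(\<lambda>n. \<bar>mu0\<bar> * real n powr (1/4 - \<gamma>)) \<longlonglongrightarrow> 0" by (rule tendsto_mult_right_zero[OF t2])
    then have e2: "eventually (\<lambda>n. \<bar>mu0\<bar> * real n powr (1/4 - \<gamma>) < \<epsilon>/2) sequentially"
      by (rule order_tendstoD(2)) (use \<epsilon> in simp)
    show ?thesis using eventually_conj[OF eventually_ge_at_top[of 2] eventually_conj[OF e1 e2]] by simp
  qed
  have incl: "A n \<subseteq> BadF n (L n) (\<theta> n) \<union> BadX n (L n) (\<theta> n)"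
    if n: "2 \<le> n" "real n powr (1 - \<gamma>) * \<bar>b\<bar> < 1" "\<bar>mu0\<bar> * real n powr (1/4 - \<gamma>) < \<epsilon>/2" for n
  proof
    fix \<omega> assume \<omega>A: "\<omega> \<in> A n"
    then have \<omega>: "\<omega> \<in> space M"
      and gt: "\<epsilon> < (SUP ((t, r), (s, q)) \<in> S n. \<bar>Zproc h mu0 b n t r \<omega> - Zproc h mu0 b n s q \<omega>\<bar>)"
      unfolding A_def by auto
    show "\<omega> \<in> BadF n (L n) (\<theta> n) \<union> BadX n (L n) (\<theta> n)"
    proof (rule ccontr)
      assume nb: "\<omega> \<notin> BadF n (L n) (\<theta> n) \<union> BadX n (L n) (\<theta> n)"
      have HE: "\<bar>F k z \<omega>\<bar> \<le> \<theta> n" if "k \<le> n" "\<bar>z\<bar> \<le> L n + int R" for k z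
      proof (rule ccontr)
        assume "\<not> \<bar>F k z \<omega>\<bar> \<le> \<theta> n"
        then have "\<omega> \<in> BadF n (L n) (\<theta> n)" unfolding BadF_def using that \<omega>
          by (intro UN_I[of "(k, z)"]) auto
        then show False using nb by auto
      qed
      have HX: "\<bar>xi (int t) y \<omega>\<bar> \<le> \<theta> n" if "1 \<le> t" "t \<le> n" "\<bar>y\<bar> \<le> L n" for t y
      proof (rule ccontr)
        assume "\<not> \<bar>xi (int t) y \<omega>\<bar> \<le> \<theta> n"
        then have "\<omega> \<in> BadX n (L n) (\<theta> n)" unfolding BadX_def using that \<omega>
          by (intro UN_I[of "(t, y)"]) auto
        then show False using nb by auto
      qed
      have npos: "0 < real n" using n by simp
      have \<theta>0: "0 \<le> \<theta> n" unfolding \<theta>_def using c by simp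
      have key: "real n powr (-1/4) * ((real R + 3) * \<theta> n) = \<epsilon>/2"
      proof -
        have "real n powr (-1/4) * real n powr (1/4) = 1" using npos by (simp add: powr_add[symmetric])
        then have "real n powr (-1/4) * ((real R + 3) * \<theta> n) = (real R + 3) * c"
          unfolding \<theta>_def by (simp add: algebra_simps)
        also have "\<dots> = \<epsilon>/2" unfolding c_def by (simp add: field_simps)
        finally show ?thesis .
      qed
      have "(SUP ((t, r), (s, q)) \<in> S n. \<bar>Zproc h mu0 b n t r \<omega> - Zproc h mu0 b n s q \<omega>\<bar>) \<le> \<epsilon>"
      proof (rule cSUP_least)
        have "((0, 0), (0, 0)) \<in> S n" unfolding S_def using npos by auto
        then show "S n \<noteq> {}" by auto
        fix x assume x: "x \<in> S n"
        obtain t r s q where xe: "x = ((t, r), (s, q))" by (metis prod.exhaust)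
        have tr: "t \<in> {0..1}" "r \<in> {0..1}" "s \<in> {0..1}" "q \<in> {0..1}" and d: "dist (t, r) (s, q) < real n powr (- \<gamma>)"
          using x unfolding S_def xe by auto
        have "\<bar>Zproc h mu0 b n t r \<omega> - Zproc h mu0 b n s q \<omega>\<bar>
            \<le> real n powr (-1/4) * ((real R + 3) * \<theta> n) + \<bar>mu0\<bar> * real n powr (1/4 - \<gamma>)"
          by (rule pair_bound[OF n(1) \<gamma> _ \<omega> \<theta>0 HE HX _ tr d])
             (use n(2) in \<open>auto simp: L_def Bb_def\<close>)
        also have "\<dots> \<le> \<epsilon>" using key n(3) by simp
        finally show "(\<lambda>((t, r), (s, q)). \<bar>Zproc h mu0 b n t r \<omega> - Zproc h mu0 b n s q \<omega>\<bar>) x \<le> \<epsilon>"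
          unfolding xe by simp
      qed
      then show False using gt by simp
    qed
  qed
  have bound: "measure M (A n) \<le> K / real n"
    if n: "2 \<le> n" "real n powr (1 - \<gamma>) * \<bar>b\<bar> < 1" "\<bar>mu0\<bar> * real n powr (1/4 - \<gamma>) < \<epsilon>/2" for n
  proof -
    have npos: "0 < real n" using n by simp
    have \<theta>pos: "0 < \<theta> n" unfolding \<theta>_def using c npos by simp
    have \<theta>12: "\<theta> n ^ 12 = c^12 * (real n)^3"
    proof -
      have "(real n powr (1/4)) ^ 12 = real n powr 3" using npos by (simp add: powr_power)
      then show ?thesis unfolding \<theta>_def using npos by (simp add: power_mult_distrib)
    qed
    have "measure M (A n) \<le> prob (BadF n (L n) (\<theta> n) \<union> BadX n (L n) (\<theta> n))"
      by (rule measure_le_sets[OF incl[OF n]]) (use BadF_sets BadX_sets in auto)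
    also have "\<dots> \<le> prob (BadF n (L n) (\<theta> n)) + prob (BadX n (L n) (\<theta> n))"
      by (rule measure_Un_le[OF BadF_sets BadX_sets])
    also have "\<dots> \<le> real (card ({..n} \<times> {-(L n + int R)..L n + int R})) * (CF / \<theta> n ^ 12)
        + real (card ({1..n} \<times> {-L n..L n})) * (mxi / \<theta> n ^ 12)"
      by (intro add_mono BadF_prob BadX_prob \<theta>pos)
    also have "\<dots> = (real (card ({..n} \<times> {-(int n * Bb + 2 + int R)..int n * Bb + 2 + int R})) * CF
        + real (card ({1..n} \<times> {-(int n * Bb + 2)..int n * Bb + 2})) * mxi) / \<theta> n ^ 12"
      unfolding L_def by (simp add: add_divide_distrib)
    also have "\<dots> \<le> ((real n)^2 * (2 * (2 * of_int Bb + 5 + 2 * real R) * CF + (2 * of_int Bb + 5) * mxi)) / \<theta> n ^ 12"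
      by (intro divide_right_mono card_bound Bb CF_nn) (use n mxi_pos \<theta>pos in auto)
    also have "\<dots> = K / real n" unfolding \<theta>12 K_def using npos c by (simp add: field_simps power2_eq_square power3_eq_cube)
    finally show ?thesis .
  qed
  have "(\<lambda>n. measure M (A n)) \<longlonglongrightarrow> 0"
  proof (rule tendsto_sandwich[where f="\<lambda>_. 0" and h="\<lambda>n. K / real n"])
    show "eventually (\<lambda>n. 0 \<le> measure M (A n)) sequentially" by simp
    show "eventually (\<lambda>n. measure M (A n) \<le> K / real n) sequentially"
      using ev by eventually_elim (use bound in blast)
    show "(\<lambda>n. K / real n) \<longlonglongrightarrow> 0" by (rule lim_const_over_n)
  qed simp
  then show ?thesis unfolding A_def S_def .
qed

end

lemma p_one_from_has_sum:
  fixes p :: "int \<Rightarrow> real"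
  assumes ps: "(p has_sum 1) UNIV" and supp: "\<And>x. \<bar>x\<bar> > int R \<Longrightarrow> p x = 0"
  shows "(\<Sum>a\<in>{-int R..int R}. p a) = 1"
proof -
  have "(p has_sum 1) {-int R..int R}"
    using ps by (subst has_sum_cong_neutral[where T=UNIV and g=p]) (auto simp: supp)
  moreover have "(p has_sum (\<Sum>a\<in>{-int R..int R}. p a)) {-int R..int R}" by (rule has_sum_finite) simp
  ultimately show ?thesis using has_sum_unique by blast
qed

lemma infsum_shift_supp:
  fixes p H :: "int \<Rightarrow> real"
  assumes supp: "\<And>a. \<bar>a\<bar> > int R \<Longrightarrow> p a = 0"
  shows "(\<Sum>\<^sub>\<infinity>y. p (y - x) * H y) = (\<Sum>a\<in>{-int R..int R}. p a * H (x + a))"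
proof -
  have "(\<Sum>\<^sub>\<infinity>y. p (y - x) * H y) = infsum (\<lambda>y. p (y - x) * H y) ((\<lambda>a. x + a) ` {-int R..int R})"
  proof (rule infsum_cong_neutral)
    fix y assume "y \<in> UNIV - (\<lambda>a. x + a) ` {-int R..int R}"
    then have "\<bar>y - x\<bar> > int R" by (auto simp: image_iff)
    then show "p (y - x) * H y = 0" using supp by simp
  qed auto
  also have "\<dots> = (\<Sum>y\<in>(\<lambda>a. x + a) ` {-int R..int R}. p (y - x) * H y)" by simp
  also have "\<dots> = (\<Sum>a\<in>{-int R..int R}. p a * H (x + a))" by (subst sum.reindex) (auto simp: inj_on_def)
  finally show ?thesis .
qed

lemma infsum_supp_window:
  fixes f :: "int \<Rightarrow> real"
  assumes supp: "\<And>a. \<bar>a\<bar> > N \<Longrightarrow> f a = 0"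
  shows "(\<Sum>\<^sub>\<infinity>a. f a) = (\<Sum>a\<in>{-N..N}. f a)"
proof -
  have "(\<Sum>\<^sub>\<infinity>a. f a) = infsum f {-N..N}"
    by (rule infsum_cong_neutral) (use supp in auto)
  then show ?thesis by simp
qed

context walk begin

lemma kstep_PP: "kstep p k z = PP k z"
proof (induction k arbitrary: z)
  case 0 then show ?case by simp
next
  case (Suc k)
  have "kstep p (Suc k) z = (\<Sum>\<^sub>\<infinity>w. p w * PP k (z - w))" by (simp add: Suc.IH)
  also have "\<dots> = (\<Sum>w\<in>{-int R..int R}. p w * PP k (z - w))"
    by (rule infsum_supp_window) (simp add: p_supp)
  finally show ?case by simp
qed

end

context prob_space begin

lemma fatou12:
  fixes f :: "'a \<Rightarrow> real" and S :: "nat \<Rightarrow> 'a \<Rightarrow> real"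
  assumes f: "f \<in> borel_measurable M" and Sm: "\<And>K. S K \<in> borel_measurable M"
    and lim: "AE \<omega> in M. (\<lambda>K. S K \<omega>) \<longlonglongrightarrow> f \<omega>"
    and Si: "\<And>K. integrable M (\<lambda>\<omega>. S K \<omega> ^ 12)" and SC: "\<And>K. expectation (\<lambda>\<omega>. S K \<omega> ^ 12) \<le> C"
  shows "integrable M (\<lambda>\<omega>. f \<omega> ^ 12)" "expectation (\<lambda>\<omega>. f \<omega> ^ 12) \<le> C"
proof -
  have C0: "0 \<le> C"
  proof -
    have "0 \<le> expectation (\<lambda>\<omega>. S 0 \<omega> ^ 12)" by (intro integral_nonneg_AE) (auto simp: zero_le_even_power)
    then show ?thesis using SC[of 0] by linarith
  qed
  have "(\<integral>\<^sup>+\<omega>. ennreal (f \<omega> ^ 12) \<partial>M) = (\<integral>\<^sup>+\<omega>. liminf (\<lambda>K. ennreal (S K \<omega> ^ 12)) \<partial>M)"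
  proof (rule nn_integral_cong_AE)
    show "AE \<omega> in M. ennreal (f \<omega> ^ 12) = liminf (\<lambda>K. ennreal (S K \<omega> ^ 12))"
      using lim
    proof eventually_elim
      case (elim \<omega>)
      have t: "(\<lambda>K. ennreal (S K \<omega> ^ 12)) \<longlonglongrightarrow> ennreal (f \<omega> ^ 12)"
        by (intro tendsto_ennrealI tendsto_power elim)
      have "liminf (\<lambda>K. ennreal (S K \<omega> ^ 12)) = ennreal (f \<omega> ^ 12)"
        by (rule lim_imp_Liminf[OF _ t]) simp
      then show ?case by simp
    qed
  qed
  also have "\<dots> \<le> liminf (\<lambda>K. \<integral>\<^sup>+\<omega>. ennreal (S K \<omega> ^ 12) \<partial>M)"
    by (rule nn_integral_liminf) (use Sm in simp)
  also have "\<dots> \<le> liminf (\<lambda>K. ennreal C)"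
  proof (rule Liminf_mono, intro always_eventually allI)
    fix K
    have "(\<integral>\<^sup>+\<omega>. ennreal (S K \<omega> ^ 12) \<partial>M) = ennreal (expectation (\<lambda>\<omega>. S K \<omega> ^ 12))"
      by (rule nn_integral_eq_integral[OF Si]) (auto simp: zero_le_even_power)
    also have "\<dots> \<le> ennreal C" using SC[of K] by (simp add: ennreal_leI)
    finally show "(\<integral>\<^sup>+\<omega>. ennreal (S K \<omega> ^ 12) \<partial>M) \<le> ennreal C" .
  qed
  also have "\<dots> = ennreal C" by (simp add: Liminf_const)
  finally have nn: "(\<integral>\<^sup>+\<omega>. ennreal (f \<omega> ^ 12) \<partial>M) \<le> ennreal C" .
  show i: "integrable M (\<lambda>\<omega>. f \<omega> ^ 12)"
    by (rule integrableI_nonneg) (use f nn in \<open>auto simp: zero_le_even_power top.not_eq_extremum intro: le_less_trans\<close>)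
  have "expectation (\<lambda>\<omega>. f \<omega> ^ 12) = enn2real (\<integral>\<^sup>+\<omega>. ennreal (f \<omega> ^ 12) \<partial>M)"
    by (rule integral_eq_nn_integral) (use f in \<open>auto simp: zero_le_even_power\<close>)
  also have "\<dots> \<le> C" using nn C0 by (simp add: enn2real_leI)
  finally show "expectation (\<lambda>\<omega>. f \<omega> ^ 12) \<le> C" .
qed

end

context prob_space begin

lemma eta_marg:
  fixes eta :: "int \<Rightarrow> 'a \<Rightarrow> real"
  assumes em: "\<And>x. eta x \<in> borel_measurable M"
    and stat: "\<And>k. distr M (PiM UNIV (\<lambda>_. borel)) (\<lambda>\<omega> x. eta (x + k) \<omega>)
                       = distr M (PiM UNIV (\<lambda>_. borel)) (\<lambda>\<omega> x. eta x \<omega>)"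
  shows "distr M borel (eta k) = distr M borel (eta 0)"
proof -
  have m: "(\<lambda>\<omega> x. eta (x + j) \<omega>) \<in> measurable M (PiM UNIV (\<lambda>_. borel))" for j
    by (rule measurable_PiM_single') (use em in auto)
  have pr: "(\<lambda>g. g 0) \<in> measurable (PiM UNIV (\<lambda>_. borel :: real measure)) borel"
    by (rule measurable_component_singleton) simp
  have "distr M borel (eta k) = distr (distr M (PiM UNIV (\<lambda>_. borel)) (\<lambda>\<omega> x. eta (x + k) \<omega>)) borel (\<lambda>g. g 0)"
    by (subst distr_distr[OF pr m]) (simp add: comp_def)
  also have "\<dots> = distr (distr M (PiM UNIV (\<lambda>_. borel)) (\<lambda>\<omega> x. eta (x + 0) \<omega>)) borel (\<lambda>g. g 0)"
    using stat[of k] stat[of 0] by simp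
  also have "\<dots> = distr M borel (eta 0)"
    by (subst distr_distr[OF pr m]) (simp add: comp_def)
  finally show ?thesis .
qed

lemma eta_mom_stat:
  fixes eta :: "int \<Rightarrow> 'a \<Rightarrow> real"
  assumes em: "\<And>x. eta x \<in> borel_measurable M"
    and stat: "\<And>k. distr M (PiM UNIV (\<lambda>_. borel)) (\<lambda>\<omega> x. eta (x + k) \<omega>)
                       = distr M (PiM UNIV (\<lambda>_. borel)) (\<lambda>\<omega> x. eta x \<omega>)"
    and i0: "integrable M (\<lambda>\<omega>. eta 0 \<omega> ^ 12)"
  shows "integrable M (\<lambda>\<omega>. eta x \<omega> ^ 12)" "expectation (\<lambda>\<omega>. eta x \<omega> ^ 12) \<le> expectation (\<lambda>\<omega>. eta 0 \<omega> ^ 12)"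
  using same_distr[OF eta_marg[OF em stat, of x] em em, of "\<lambda>v. v ^ 12"] i0 by auto

lemma powr_to_pow12:
  fixes X :: "'a \<Rightarrow> real"
  assumes X: "X \<in> borel_measurable M" and \<delta>: "0 < \<delta>" and i: "integrable M (\<lambda>\<omega>. \<bar>X \<omega>\<bar> powr (12 + \<delta>))"
  shows "integrable M (\<lambda>\<omega>. X \<omega> ^ 12)"
proof -
  have ib: "integrable M (\<lambda>\<omega>. 1 + \<bar>X \<omega>\<bar> powr (12 + \<delta>))" using i by simp
  have pt: "\<bar>X \<omega> ^ 12\<bar> \<le> \<bar>1 + \<bar>X \<omega>\<bar> powr (12 + \<delta>)\<bar>" for \<omega>
  proof (cases "\<bar>X \<omega>\<bar> \<le> 1")
    case True
    then have a: "\<bar>X \<omega>\<bar> ^ 12 \<le> 1" by (intro power_le_one) auto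
    have b: "0 \<le> \<bar>X \<omega>\<bar> powr (12 + \<delta>)" by simp
    have c: "\<bar>X \<omega> ^ 12\<bar> = \<bar>X \<omega>\<bar> ^ 12" by (simp add: power_abs)
    show ?thesis using a b c by linarith
  next
    case False
    then have "\<bar>X \<omega>\<bar> ^ 12 = \<bar>X \<omega>\<bar> powr 12" by (simp add: powr_numeral)
    also have "\<dots> \<le> \<bar>X \<omega>\<bar> powr (12 + \<delta>)" using False \<delta> by (intro powr_mono) auto
    finally show ?thesis by (simp add: power_abs)
  qed
  show ?thesis by (rule Bochner_Integration.integrable_bound[OF ib]) (use X pt in auto)
qed

end

locale xw = xisetup M xi + walk p R for M :: "'a measure" and xi p R
begin

lemma eta_case_c:
  fixes eta :: "int \<Rightarrow> 'a \<Rightarrow> real" and x :: int and Cg :: real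
  assumes em: "eta x \<in> borel_measurable M"
    and grad: "\<And>k N. int k * int R + 1 \<le> N \<Longrightarrow> (\<Sum>i<k. \<Sum>z\<in>{-N..N}. (PP i z - PP i (z + 1))^2) \<le> Cg"
    and ser: "AE \<omega> in M. (\<lambda>k. \<Sum>\<^sub>\<infinity>y. xi (- int k) y \<omega> * (kstep p k (y - x) - kstep p k (y - x + 1)))
                           sums eta x \<omega>"
  shows "integrable M (\<lambda>\<omega>. eta x \<omega> ^ 12)" "expectation (\<lambda>\<omega>. eta x \<omega> ^ 12) \<le> Cm 6 * (1 + mxi * Cg)^6"
proof -
  define NK where "NK K = int K * int R + 1" for K :: nat
  define S where "S K \<omega> = (\<Sum>k<K. \<Sum>z\<in>{-NK K..NK K}. (PP k z - PP k (z + 1)) * xi (- int k) (x + z) \<omega>)" for K \<omega>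
  have T: "(\<Sum>\<^sub>\<infinity>y. xi (- int k) y \<omega> * (kstep p k (y - x) - kstep p k (y - x + 1)))
      = (\<Sum>z\<in>{-N..N}. (PP k z - PP k (z + 1)) * xi (- int k) (x + z) \<omega>)" if N: "int k * int R + 1 \<le> N" for k N \<omega>
  proof -
    have "(\<Sum>\<^sub>\<infinity>y. xi (- int k) y \<omega> * (kstep p k (y - x) - kstep p k (y - x + 1)))
        = (\<Sum>\<^sub>\<infinity>y. (\<lambda>a. PP k a - PP k (a + 1)) (y - x) * xi (- int k) y \<omega>)"
      by (simp add: kstep_PP mult.commute)
    also have "\<dots> = (\<Sum>a\<in>{-int (k * R + 1)..int (k * R + 1)}. (PP k a - PP k (a + 1)) * xi (- int k) (x + a) \<omega>)"
      by (rule infsum_shift_supp) (auto simp: PP_supp)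
    also have "\<dots> = (\<Sum>z\<in>{-N..N}. (PP k z - PP k (z + 1)) * xi (- int k) (x + z) \<omega>)"
      by (rule sum_win[symmetric]) (use N in \<open>auto simp: PP_supp\<close>)
    finally show ?thesis .
  qed
  have lim: "AE \<omega> in M. (\<lambda>K. S K \<omega>) \<longlonglongrightarrow> eta x \<omega>"
    using ser
  proof eventually_elim
    case (elim \<omega>)
    have "S K \<omega> = (\<Sum>k<K. \<Sum>\<^sub>\<infinity>y. xi (- int k) y \<omega> * (kstep p k (y - x) - kstep p k (y - x + 1)))" for K
      unfolding S_def
    proof (intro sum.cong refl)
      fix k assume "k \<in> {..<K}"
      then have "int k * int R + 1 \<le> NK K" by (simp add: NK_def mult_right_mono)
      then show "(\<Sum>z\<in>{-NK K..NK K}. (PP k z - PP k (z + 1)) * xi (- int k) (x + z) \<omega>)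
          = (\<Sum>\<^sub>\<infinity>y. xi (- int k) y \<omega> * (kstep p k (y - x) - kstep p k (y - x + 1)))"
        using T by simp
    qed
    then show ?case using elim by (simp add: sums_def)
  qed
  have Sm: "S K \<in> borel_measurable M" for K unfolding S_def using xi_meas by simp
  have inj: "inj_on (\<lambda>k::nat. - int k) {..<K}" for K by (auto simp: inj_on_def)
  have V: "(\<Sum>k\<in>{..<K}. \<Sum>z\<in>{-NK K..NK K}. (PP k z - PP k (z + 1))^2) \<le> Cg" for K
    using grad[of K "NK K"] by (simp add: NK_def)
  note r = xi_double_sum[OF inj _ G_abs V]
  have Si: "integrable M (\<lambda>\<omega>. S K \<omega> ^ 12)" for K unfolding S_def using r(1)[of K x] by simp
  have SC: "expectation (\<lambda>\<omega>. S K \<omega> ^ 12) \<le> Cm 6 * (1 + mxi * Cg)^6" for K unfolding S_def using r(2)[of K x] by simp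
  show "integrable M (\<lambda>\<omega>. eta x \<omega> ^ 12)" by (rule fatou12(1)[OF em Sm lim Si SC])
  show "expectation (\<lambda>\<omega>. eta x \<omega> ^ 12) \<le> Cm 6 * (1 + mxi * Cg)^6" by (rule fatou12(2)[OF em Sm lim Si SC])
qed

end

theorem lemma6p5:
  fixes M :: "'a measure"
    and p :: "int \<Rightarrow> real" and Mr :: nat
    and xi :: "int \<Rightarrow> int \<Rightarrow> 'a \<Rightarrow> real"
    and h :: "nat \<Rightarrow> int \<Rightarrow> 'a \<Rightarrow> real"
    and eta :: "int \<Rightarrow> 'a \<Rightarrow> real"
    and mp b sigma1sq mu0 \<gamma> \<epsilon> :: real
  assumes P: "prob_space M"
    and p_nonneg: "\<And>x. 0 \<le> p x" and p_lt1: "\<And>x. p x < 1"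
    and p_sum: "(p has_sum 1) UNIV"
    and p_supp: "\<And>x. \<bar>x\<bar> > int Mr \<Longrightarrow> p x = 0"
    and p_aper: "\<And>u. int_subgroup_gen {u + x | x. p x > 0} = UNIV"
    and mp_def: "mp = (\<Sum>\<^sub>\<infinity>x. real_of_int x * p x)"
    and b_def: "b = - mp"
    and sigma_def: "sigma1sq = (\<Sum>\<^sub>\<infinity>x. (real_of_int x - mp)^2 * p x)"
    and sigma_pos: "sigma1sq > 0"
    and xi_meas: "\<And>t x. xi t x \<in> borel_measurable M"
    and xi_indep: "prob_space.indep_vars M (\<lambda>_. borel) (\<lambda>(t, x). xi t x) UNIV"
    and xi_ident: "\<And>t x. distr M borel (xi t x) = distr M borel (xi 0 0)"
    and xi_int: "integrable M (xi 0 0)"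
    and xi_mean: "integral\<^sup>L M (xi 0 0) = 0"
    and xi_mom: "integrable M (\<lambda>\<omega>. (xi 0 0 \<omega>) ^ 12)"
    and h_step: "\<And>t x \<omega>. \<omega> \<in> space M \<Longrightarrow>
        h (Suc t) x \<omega> = (\<Sum>\<^sub>\<infinity>y. p (y - x) * h t y \<omega>) + xi (int t + 1) x \<omega>"
    and h0_0: "\<And>\<omega>. \<omega> \<in> space M \<Longrightarrow> h 0 0 \<omega> = 0"
    and eta_def: "\<And>x \<omega>. \<omega> \<in> space M \<Longrightarrow> eta x \<omega> = h 0 x \<omega> - h 0 (x - 1) \<omega>"
    and eta_meas: "\<And>x. eta x \<in> borel_measurable M"
    and eta_stat: "\<And>k. distr M (PiM UNIV (\<lambda>_. borel)) (\<lambda>\<omega> x. eta (x + k) \<omega>)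
                       = distr M (PiM UNIV (\<lambda>_. borel)) (\<lambda>\<omega> x. eta x \<omega>)"
    and eta_indep: "prob_space.indep_set M (gen_field M eta UNIV)
        (gen_field M (\<lambda>(t, x). xi t x) {(t, x). t \<ge> 1})"
    and eta_int: "\<And>x. integrable M (eta x)"
    and eta_mean: "\<And>x. integral\<^sup>L M (eta x) = mu0"
    and cases:
      "(prob_space.indep_vars M (\<lambda>_. borel) eta UNIV
          \<and> (\<forall>x. distr M borel (eta x) = distr M borel (eta 0))
          \<and> integrable M (\<lambda>\<omega>. (eta 0 \<omega>) ^ 12))
       \<or> ((strong_mixing_coeff M eta \<longlonglongrightarrow> 0)
          \<and> (\<exists>\<delta>>0. integrable M (\<lambda>\<omega>. \<bar>eta 0 \<omega>\<bar> powr (12 + \<delta>))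
                 \<and> summable (\<lambda>j. (real j + 1) powr (10 + 132 / \<delta>) * strong_mixing_coeff M eta j)))
       \<or> (\<forall>x. AE \<omega> in M. (\<lambda>k. \<Sum>\<^sub>\<infinity>y. xi (- int k) y \<omega> * (kstep p k (y - x) - kstep p k (y - x + 1)))
                           sums eta x \<omega>)"
    and gamma: "1 < \<gamma>" "\<gamma> < 3/2"
    and eps: "\<epsilon> > 0"
  shows "(\<lambda>n. measure M {\<omega> \<in> space M.
            (SUP ((t, r), (s, q)) \<in> {((t, r), (s, q)). (t, r) \<in> {0..1} \<times> {0..1} \<and> (s, q) \<in> {0..1} \<times> {0..1}
                                      \<and> dist (t, r) (s, q) < real n powr (- \<gamma>)}.
               \<bar>Zproc h mu0 b n t r \<omega> - Zproc h mu0 b n s q \<omega>\<bar>) > \<epsilon>})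
         \<longlonglongrightarrow> 0"
proof -
  interpret prob_space M by (rule P)
  have p_one: "(\<Sum>a\<in>{-int Mr..int Mr}. p a) = 1" by (rule p_one_from_has_sum[OF p_sum p_supp])
  interpret W: walk p Mr using p_nonneg p_supp p_one by unfold_locales
  interpret X: xisetup M xi using xi_meas xi_indep xi_ident xi_int xi_mean xi_mom by unfold_locales auto
  interpret XW: xw M xi p Mr by unfold_locales
  obtain s0 where s0: "p s0 > 0"
  proof -
    have "\<exists>a\<in>{-int Mr..int Mr}. p a \<noteq> 0"
    proof (rule ccontr)
      assume "\<not> ?thesis"
      then have "(\<Sum>a\<in>{-int Mr..int Mr}. p a) = 0" by simp
      then show False using p_one by simp
    qed
    then obtain a where "p a \<noteq> 0" by blast
    then have "p a > 0" using p_nonneg[of a] by simp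
    then show ?thesis by (rule that)
  qed
  have gen: "int_subgroup_gen {(- s0) + x | x. p x > 0} = UNIV" by (rule p_aper)
  obtain Cg where grad: "\<And>k N. int k * int Mr + 1 \<le> N \<Longrightarrow>
      (\<Sum>i<k. \<Sum>z\<in>{-N..N}. (W.PP i z - W.PP i (z + 1))^2) \<le> Cg"
    using W.grad_sum[OF s0 gen] by blast
  obtain Ce where e1: "\<And>x. integrable M (\<lambda>\<omega>. eta x \<omega> ^ 12)"
    and e2: "\<And>x. expectation (\<lambda>\<omega>. eta x \<omega> ^ 12) \<le> Ce"
  proof -
    consider (a) "integrable M (\<lambda>\<omega>. (eta 0 \<omega>) ^ 12)"
      | (c) "\<forall>x. AE \<omega> in M. (\<lambda>k. \<Sum>\<^sub>\<infinity>y. xi (- int k) y \<omega> * (kstep p k (y - x) - kstep p k (y - x + 1)))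
                           sums eta x \<omega>"
    proof -
      { assume "\<exists>\<delta>>0. integrable M (\<lambda>\<omega>. \<bar>eta 0 \<omega>\<bar> powr (12 + \<delta>))
                 \<and> summable (\<lambda>j. (real j + 1) powr (10 + 132 / \<delta>) * strong_mixing_coeff M eta j)"
        then obtain \<delta> where "\<delta> > 0" "integrable M (\<lambda>\<omega>. \<bar>eta 0 \<omega>\<bar> powr (12 + \<delta>))" by blast
        then have "integrable M (\<lambda>\<omega>. (eta 0 \<omega>) ^ 12)" by (intro powr_to_pow12 eta_meas)
      }
      then show ?thesis using cases that by blast
    qed
    then show ?thesis
    proof cases
      case a
      show ?thesis
        by (rule that[of "expectation (\<lambda>\<omega>. eta 0 \<omega> ^ 12)"])
           (intro eta_mom_stat[OF eta_meas eta_stat a])+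
    next
      case c
      show ?thesis
      proof (rule that[of "Cm 6 * (1 + X.mxi * Cg)^6"])
        fix x
        have cx: "AE \<omega> in M. (\<lambda>k. \<Sum>\<^sub>\<infinity>y. xi (- int k) y \<omega> * (kstep p k (y - x) - kstep p k (y - x + 1)))
                           sums eta x \<omega>" using c by blast
        note r = XW.eta_case_c[where eta=eta and x=x, OF eta_meas[of x] grad cx]
        show "integrable M (\<lambda>\<omega>. eta x \<omega> ^ 12)" by (rule r(1))
        show "expectation (\<lambda>\<omega>. eta x \<omega> ^ 12) \<le> Cm 6 * (1 + X.mxi * Cg)^6" by (rule r(2))
      qed
    qed
  qed
  have h_step': "h (Suc t) x \<omega> = (\<Sum>a\<in>{-int Mr..int Mr}. p a * h t (x + a) \<omega>) + xi (int t + 1) x \<omega>"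
    if "\<omega> \<in> space M" for t x \<omega>
    using h_step[OF that, of t x] infsum_shift_supp[of Mr p x "\<lambda>y. h t y \<omega>"] p_supp by simp
  interpret H: harness M xi p Mr h eta Ce Cg
    by unfold_locales (use h_step' eta_def eta_meas e1 e2 grad in auto)
  show ?thesis by (rule H.main_limit[OF gamma(1) eps])
qed


end
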